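(* In the gamma mixture of IBPs with parameters $0\le\alpha<1$, $\theta>-\alpha$ and $\gamma\sim\mathrm{Gamma}(a,b)$, given a sample $\mathbf Z^{(n)}$ with $K_n=k$ features, the posterior is $\gamma\mid\mathbf Z^{(n)}\sim\mathrm{Gamma}(a+k,b+g_n(\theta,\alpha))$. Moreover, as $m\to\infty$: if $\alpha=0$, $$\frac{K^{(n)}_m}{\log m}\,\Big|\,\mathbf Z^{(n)}\ \xrightarrow{d}\ \mathrm{Gamma}\Big(a+k,\frac{b+g_n(\theta,0)}{\theta}\Big);$$ if $\alpha\in(0,1)$, $$\frac{K^{(n)}_m}{m^\alpha}\,\Big|\,\mathbf Z^{(n)}\ \xrightarrow{d}\ \mathrm{Gamma}\Big(a+k,\{b+g_n(\theta,\alpha)\}\frac{\alpha\Gamma(\theta+\alpha)}{\Gamma(\theta+1)}\Big),$$ and these limits coincide with the laws of $\gamma\theta\mid\mathbf Z^{(n)}$ and $\gamma\Gamma(\theta+1)/\{\alpha\Gamma(\theta+\alpha)\}\mid\mathbf Z^{(n)}$ respectively.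
   Context: $(x)_m=\Gamma(x+m)/\Gamma(x)$; $g_n(\theta,\alpha)=\sum_{i=1}^n\frac{(\theta+\alpha)_{i-1}}{(\theta+1)_{i-1}}$. The IBP with parameters $(\gamma,\alpha,\theta)$ is the feature model whose exchangeable feature probability function (probability of any given ordered feature allocation of $[n]$ into $k$ nonempty sets of sizes $m_1,\dots,m_k$) is $V_{n,k}\prod_{\ell=1}^k(1-\alpha)_{m_\ell-1}(\theta+\alpha)_{n-m_\ell}$ with $V_{n,k}=\frac1{k!}\{\gamma/(\theta+1)_{n-1}\}^ke^{-\gamma g_n(\theta,\alpha)}$. The gamma mixture of IBPs takes $\gamma\sim\mathrm{Gamma}(a,b)$ (shape $a>0$, rate $b>0$) and, conditionally on $\gamma$, data from the IBP. $K_n$ is the number of distinct features among the first $n$ individuals; $K^{(n)}_m$ is the number of features displayed by individuals $n+1,\dots,n+m$ not among those observed in $\mathbf Z^{(n)}$. *)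

theory Defs
  imports "HOL-Probability.Probability" "HOL-Library.Multiset"
begin

definition g_fun :: "nat \<Rightarrow> real \<Rightarrow> real \<Rightarrow> real" where
  "g_fun n \<theta> \<alpha> = (\<Sum>i=1..n. pochhammer (\<theta> + \<alpha>) (i - 1) / pochhammer (\<theta> + 1) (i - 1))"

definition gamma_density :: "real \<Rightarrow> real \<Rightarrow> real \<Rightarrow> real" where
  "gamma_density a b x = (if x > 0 then b powr a * x powr (a - 1) * exp (- b * x) / Gamma a else 0)"

definition gamma_measure :: "real \<Rightarrow> real \<Rightarrow> real measure" where
  "gamma_measure a b = density lborel (\<lambda>x. ennreal (gamma_density a b x))"

text \<open>Ordered feature allocations of $[N]=\{1..N\}$: lists of nonempty subsets of $[N]$
  (blocks may repeat).\<close>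
definition ofa :: "nat \<Rightarrow> nat set list set" where
  "ofa N = {l. \<forall>B\<in>set l. B \<noteq> {} \<and> B \<subseteq> {1..N}}"

definition ibp_efpf :: "real \<Rightarrow> real \<Rightarrow> real \<Rightarrow> nat \<Rightarrow> nat set list \<Rightarrow> real" where
  "ibp_efpf \<gamma> \<alpha> \<theta> N l =
     (1 / fact (length l)) * (\<gamma> / pochhammer (\<theta> + 1) (N - 1)) ^ length l
       * exp (- \<gamma> * g_fun N \<theta> \<alpha>)
       * (\<Prod>B\<leftarrow>l. pochhammer (1 - \<alpha>) (card B - 1) * pochhammer (\<theta> + \<alpha>) (N - card B))"

definition restr :: "nat \<Rightarrow> nat set list \<Rightarrow> nat set multiset" where
  "restr n l = mset (filter (\<lambda>B. B \<noteq> {}) (map (\<lambda>B. B \<inter> {1..n}) l))"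

definition new_feats :: "nat \<Rightarrow> nat set list \<Rightarrow> nat" where
  "new_feats n l = length (filter (\<lambda>B. B \<inter> {1..n} = {}) l)"

definition ibp_lik :: "real \<Rightarrow> real \<Rightarrow> real \<Rightarrow> nat \<Rightarrow> nat set multiset \<Rightarrow> real" where
  "ibp_lik \<gamma> \<alpha> \<theta> n z = (\<Sum>l\<in>{l. mset l = z}. ibp_efpf \<gamma> \<alpha> \<theta> n l)"

definition posterior :: "real \<Rightarrow> real \<Rightarrow> real \<Rightarrow> real \<Rightarrow> nat \<Rightarrow> nat set multiset \<Rightarrow> real measure" where
  "posterior a b \<alpha> \<theta> n z =
     density lborel (\<lambda>\<gamma>. ennreal (ibp_lik \<gamma> \<alpha> \<theta> n z * gamma_density a b \<gamma>
        / (\<integral>t. ibp_lik t \<alpha> \<theta> n z * gamma_density a b t \<partial>lborel)))"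

text \<open>Joint mixture probability that $\mathbf Z^{(n)} = z$ and $K^{(n)}_m \in J$, computed from
  the model on $[n+m]$.\<close>
definition mix_joint :: "real \<Rightarrow> real \<Rightarrow> real \<Rightarrow> real \<Rightarrow> nat \<Rightarrow> nat \<Rightarrow> nat set multiset \<Rightarrow> nat set \<Rightarrow> real" where
  "mix_joint a b \<alpha> \<theta> n m z J =
     (\<integral>\<gamma>. (\<Sum>\<^sub>\<infinity>l\<in>{l\<in>ofa (n + m). restr n l = z \<and> new_feats n l \<in> J}.
              ibp_efpf \<gamma> \<alpha> \<theta> (n + m) l) * gamma_density a b \<gamma> \<partial>lborel)"

definition cond_K :: "real \<Rightarrow> real \<Rightarrow> real \<Rightarrow> real \<Rightarrow> nat \<Rightarrow> nat \<Rightarrow> nat set multiset \<Rightarrow> nat \<Rightarrow> real" where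
  "cond_K a b \<alpha> \<theta> n m z j = mix_joint a b \<alpha> \<theta> n m z {j} / mix_joint a b \<alpha> \<theta> n m z UNIV"

definition cond_law_scaled :: "real \<Rightarrow> real \<Rightarrow> real \<Rightarrow> real \<Rightarrow> nat \<Rightarrow> nat \<Rightarrow> nat set multiset \<Rightarrow> real \<Rightarrow> real measure" where
  "cond_law_scaled a b \<alpha> \<theta> n m z c =
     distr (density (count_space UNIV) (\<lambda>j. ennreal (cond_K a b \<alpha> \<theta> n m z j))) borel
       (\<lambda>j. real j / c)"

end

theory Submission
  imports Defs "HOL-Combinatorics.Multiset_Permutations" "HOL-Real_Asymp.Real_Asymp"
begin

definition W :: "real \<Rightarrow> real \<Rightarrow> nat \<Rightarrow> nat set \<Rightarrow> real" where
  "W \<alpha> \<theta> N B = pochhammer (1 - \<alpha>) (card B - 1) * pochhammer (\<theta> + \<alpha>) (N - card B)"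

lemma W_step:
  assumes "finite B" "B \<noteq> {}" "card B \<le> N" "x \<notin> B"
  shows "W \<alpha> \<theta> (Suc N) B + W \<alpha> \<theta> (Suc N) (insert x B) = (\<theta> + real N) * W \<alpha> \<theta> N B"
proof -
  obtain c where c: "card B = Suc c" using assms(1,2) by (cases "card B") auto
  have 1: "Suc N - card B = Suc (N - card B)" using assms(3) by simp
  have 2: "card (insert x B) - 1 = Suc c" using assms c by simp
  have 3: "Suc N - card (insert x B) = N - card B" using assms by simp
  have "real (N - card B) = real N - real (Suc c)" using assms(3) c by simp
  then show ?thesis unfolding W_def 1 2 3 using c
    by (simp add: pochhammer_Suc algebra_simps)
qed

lemma W_single: "W \<alpha> \<theta> N {x} = pochhammer (\<theta> + \<alpha>) (N - 1)"
  by (simp add: W_def)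

lemma pow_interval_Suc: "{n<..n + Suc m} = insert (Suc (n + m)) {n<..n+m}"
  by auto

lemma sum_Pow_insert:
  assumes "finite X" "x \<notin> X"
  shows "(\<Sum>C\<in>Pow (insert x X). f C) = (\<Sum>C\<in>Pow X. f C + f (insert x C))"
proof -
  have d: "Pow X \<inter> insert x ` Pow X = {}" using assms by auto
  have inj: "inj_on (insert x) (Pow X)" unfolding inj_on_def by (metis PowD assms(2) in_mono insert_ident)
  have "(\<Sum>C\<in>Pow (insert x X). f C) = (\<Sum>C\<in>Pow X. f C) + (\<Sum>C\<in>insert x ` Pow X. f C)"
    unfolding Pow_insert using assms d by (intro sum.union_disjoint) auto
  also have "(\<Sum>C\<in>insert x ` Pow X. f C) = (\<Sum>C\<in>Pow X. f (insert x C))"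
    using inj by (simp add: sum.reindex)
  finally show ?thesis by (simp add: sum.distrib)
qed

lemma E_lemma:
  assumes "A \<subseteq> {1..n}" "A \<noteq> {}"
  shows "(\<Sum>C\<in>Pow {n<..n+m}. W \<alpha> \<theta> (n+m) (A \<union> C)) = W \<alpha> \<theta> n A * pochhammer (\<theta> + real n) m"
proof (induction m)
  case 0
  then show ?case by simp
next
  case (Suc m)
  have fA: "finite A" using assms finite_subset by blast
  have "(\<Sum>C\<in>Pow {n<..n+Suc m}. W \<alpha> \<theta> (n+Suc m) (A \<union> C))
      = (\<Sum>C\<in>Pow {n<..n+m}. W \<alpha> \<theta> (Suc (n+m)) (A \<union> C) + W \<alpha> \<theta> (Suc (n+m)) (insert (Suc (n+m)) (A \<union> C)))"
    unfolding pow_interval_Suc by (subst sum_Pow_insert) auto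
  also have "\<dots> = (\<Sum>C\<in>Pow {n<..n+m}. (\<theta> + real (n+m)) * W \<alpha> \<theta> (n+m) (A \<union> C))"
  proof (rule sum.cong[OF refl])
    fix C assume C: "C \<in> Pow {n<..n+m}"
    have sub: "A \<union> C \<subseteq> {1..n+m}" using C assms by auto
    have "card (A \<union> C) \<le> card {1..n+m}" by (rule card_mono[OF _ sub]) simp
    then show "W \<alpha> \<theta> (Suc (n+m)) (A \<union> C) + W \<alpha> \<theta> (Suc (n+m)) (insert (Suc (n+m)) (A \<union> C))
        = (\<theta> + real (n+m)) * W \<alpha> \<theta> (n+m) (A \<union> C)"
      using C assms fA by (intro W_step) (auto intro: finite_subset)
  qed
  also have "\<dots> = (\<theta> + real (n+m)) * (W \<alpha> \<theta> n A * pochhammer (\<theta> + real n) m)"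
    by (simp add: sum_distrib_left[symmetric] Suc.IH)
  finally show ?case by (simp add: pochhammer_Suc algebra_simps)
qed

lemma g_fun_Suc: "g_fun (Suc N) \<theta> \<alpha> = g_fun N \<theta> \<alpha> + pochhammer (\<theta> + \<alpha>) N / pochhammer (\<theta> + 1) N"
  unfolding g_fun_def by simp

lemma D_lemma:
  assumes "\<theta> + 1 > 0"
  shows "(\<Sum>C\<in>Pow {n<..n+m} - {{}}. W \<alpha> \<theta> (n+m) C)
     = pochhammer (\<theta> + 1) (n + m - 1) * (g_fun (n+m) \<theta> \<alpha> - g_fun n \<theta> \<alpha>)"
proof (induction m)
  case 0
  then show ?case by simp
next
  case (Suc m)
  define N where "N = n + m"
  define X where "X = {n<..n+m}"
  have fX: "finite X" and xX: "Suc N \<notin> X" by (auto simp: X_def N_def)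
  have eq1: "(\<Sum>C\<in>Pow (insert (Suc N) X) - {{}}. W \<alpha> \<theta> (Suc N) C)
     = (\<Sum>C\<in>Pow X - {{}}. W \<alpha> \<theta> (Suc N) C + W \<alpha> \<theta> (Suc N) (insert (Suc N) C)) + pochhammer (\<theta> + \<alpha>) N"
  proof -
    have fP: "finite (Pow (insert (Suc N) X))" "finite (Pow X)" using fX by auto
    have e0: "{} \<in> Pow (insert (Suc N) X)" "{} \<in> Pow X" by auto
    have "(\<Sum>C\<in>Pow (insert (Suc N) X). W \<alpha> \<theta> (Suc N) C)
          = W \<alpha> \<theta> (Suc N) {} + (\<Sum>C\<in>Pow (insert (Suc N) X) - {{}}. W \<alpha> \<theta> (Suc N) C)"
      by (rule sum.remove[OF fP(1) e0(1)])
    moreover have "(\<Sum>C\<in>Pow X. W \<alpha> \<theta> (Suc N) C + W \<alpha> \<theta> (Suc N) (insert (Suc N) C))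
          = (W \<alpha> \<theta> (Suc N) {} + W \<alpha> \<theta> (Suc N) {Suc N}) + (\<Sum>C\<in>Pow X - {{}}. W \<alpha> \<theta> (Suc N) C + W \<alpha> \<theta> (Suc N) (insert (Suc N) C))"
      by (subst sum.remove[OF fP(2) e0(2)]) simp
    moreover have "(\<Sum>C\<in>Pow (insert (Suc N) X). W \<alpha> \<theta> (Suc N) C) 
        = (\<Sum>C\<in>Pow X. W \<alpha> \<theta> (Suc N) C + W \<alpha> \<theta> (Suc N) (insert (Suc N) C))"
      by (rule sum_Pow_insert[OF fX xX])
    ultimately show ?thesis by (simp add: W_single)
  qed
  also have "(\<Sum>C\<in>Pow X - {{}}. W \<alpha> \<theta> (Suc N) C + W \<alpha> \<theta> (Suc N) (insert (Suc N) C))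
     = (\<Sum>C\<in>Pow X - {{}}. (\<theta> + real N) * W \<alpha> \<theta> N C)"
  proof (rule sum.cong[OF refl])
    fix C assume C: "C \<in> Pow X - {{}}"
    have sub: "C \<subseteq> {1..N}" using C by (auto simp: X_def N_def)
    have "card C \<le> card {1..N}" by (rule card_mono[OF _ sub]) simp
    then show "W \<alpha> \<theta> (Suc N) C + W \<alpha> \<theta> (Suc N) (insert (Suc N) C) = (\<theta> + real N) * W \<alpha> \<theta> N C"
      using C xX fX by (intro W_step) (auto intro: finite_subset)
  qed
  also have "\<dots> = (\<theta> + real N) * (pochhammer (\<theta> + 1) (N - 1) * (g_fun N \<theta> \<alpha> - g_fun n \<theta> \<alpha>))"
    using Suc.IH by (simp add: sum_distrib_left[symmetric] X_def N_def)
  finally have eq2: "(\<Sum>C\<in>Pow (insert (Suc N) X) - {{}}. W \<alpha> \<theta> (Suc N) C)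
     = (\<theta> + real N) * (pochhammer (\<theta> + 1) (N - 1) * (g_fun N \<theta> \<alpha> - g_fun n \<theta> \<alpha>)) + pochhammer (\<theta> + \<alpha>) N" .
  have pne: "pochhammer (\<theta> + 1) N \<noteq> 0"
    using assms by (auto simp: pochhammer_eq_0_iff)
  have rhs: "pochhammer (\<theta> + 1) (Suc N - 1) * (g_fun (Suc N) \<theta> \<alpha> - g_fun n \<theta> \<alpha>)
     = (\<theta> + real N) * (pochhammer (\<theta> + 1) (N - 1) * (g_fun N \<theta> \<alpha> - g_fun n \<theta> \<alpha>)) + pochhammer (\<theta> + \<alpha>) N"
  proof (cases N)
    case 0
    then have "n = 0" by (simp add: N_def)
    then show ?thesis using 0 by (simp add: g_fun_Suc)
  next
    case (Suc M)
    have "pochhammer (\<theta> + 1) N = (\<theta> + real N) * pochhammer (\<theta> + 1) (N - 1)"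
      using Suc by (simp add: pochhammer_Suc algebra_simps)
    then show ?thesis using pne by (simp add: g_fun_Suc field_simps)
  qed
  have fin: "(\<Sum>C\<in>Pow (insert (Suc N) X) - {{}}. W \<alpha> \<theta> (Suc N) C)
     = pochhammer (\<theta> + 1) (Suc N - 1) * (g_fun (Suc N) \<theta> \<alpha> - g_fun n \<theta> \<alpha>)"
    using eq2 rhs by simp
  have iv: "{n<..Suc N} = insert (Suc N) X" by (auto simp: X_def N_def)
  have nn: "n + Suc m = Suc N" by (simp add: N_def)
  show ?case unfolding nn iv using fin by simp
qed

definition SL :: "nat \<Rightarrow> nat \<Rightarrow> nat set multiset \<Rightarrow> nat \<Rightarrow> nat set list set" where
  "SL n N z j = {l. (\<forall>B\<in>set l. B \<noteq> {} \<and> B \<subseteq> {1..N}) \<and> restr n l = z \<and> new_feats n l = j}"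

definition FF :: "nat \<Rightarrow> nat \<Rightarrow> (nat set \<Rightarrow> real) \<Rightarrow> nat set multiset \<Rightarrow> nat \<Rightarrow> real" where
  "FF n N w z j = (\<Sum>l\<in>SL n N z j. prod_list (map w l))"

definition EE :: "nat \<Rightarrow> nat \<Rightarrow> (nat set \<Rightarrow> real) \<Rightarrow> nat set \<Rightarrow> real" where
  "EE n N w A = (\<Sum>C\<in>Pow {n<..N}. w (A \<union> C))"

definition DD :: "nat \<Rightarrow> nat \<Rightarrow> (nat set \<Rightarrow> real) \<Rightarrow> real" where
  "DD n N w = (\<Sum>C\<in>Pow {n<..N} - {{}}. w C)"

definition LL :: "(nat set \<Rightarrow> real) \<Rightarrow> nat set multiset \<Rightarrow> real" where
  "LL e z = (\<Sum>l\<in>permutations_of_multiset z. prod_list (map e l))"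

lemma restr_Nil[simp]: "restr n [] = {#}" by (simp add: restr_def)
lemma restr_Cons: "restr n (B # t) = (if B \<inter> {1..n} = {} then restr n t else add_mset (B \<inter> {1..n}) (restr n t))"
  by (simp add: restr_def)
lemma new_Nil[simp]: "new_feats n [] = 0" by (simp add: new_feats_def)
lemma new_Cons: "new_feats n (B # t) = (if B \<inter> {1..n} = {} then Suc (new_feats n t) else new_feats n t)"
  by (simp add: new_feats_def)

lemma length_restr_new: "length l = size (restr n l) + new_feats n l"
  by (induction l) (auto simp: restr_Cons new_Cons)

lemma length_SL: "l \<in> SL n N z j \<Longrightarrow> length l = size z + j"
  unfolding SL_def using length_restr_new by auto

lemma finite_SL: "finite (SL n N z j)"
proof -
  have "SL n N z j \<subseteq> {l. set l \<subseteq> Pow {1..N} \<and> length l = size z + j}"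
    using length_SL by (auto simp: SL_def)
  moreover have "finite {l. set l \<subseteq> Pow {1..N} \<and> length l = size z + j}"
    by (rule finite_lists_length_eq) simp
  ultimately show ?thesis by (rule finite_subset)
qed

lemma SL_Nil: "[] \<in> SL n N z j \<longleftrightarrow> z = {#} \<and> j = 0"
  by (auto simp: SL_def)

lemma SL_empty_0: "SL n N {#} 0 = {[]}"
proof -
  have "l = []" if "l \<in> SL n N {#} 0" for l
    using length_SL[OF that] by simp
  then show ?thesis using SL_Nil[of n N "{#}" 0] by blast
qed

lemma L_rec:
  assumes "z \<noteq> {#}"
  shows "LL e z = (\<Sum>A\<in>set_mset z. e A * LL e (z - {#A#}))"
proof -
  have "LL e z = (\<Sum>l\<in>(\<Union>x\<in>set_mset z. ((#) x) ` permutations_of_multiset (z - {#x#})). prod_list (map e l))"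
    unfolding LL_def permutations_of_multiset_nonempty[OF assms] ..
  also have "\<dots> = (\<Sum>x\<in>set_mset z. \<Sum>l\<in>((#) x) ` permutations_of_multiset (z - {#x#}). prod_list (map e l))"
    by (rule sum.UNION_disjoint) auto
  also have "\<dots> = (\<Sum>x\<in>set_mset z. e x * LL e (z - {#x#}))"
  proof (rule sum.cong[OF refl])
    fix x
    have "(\<Sum>l\<in>((#) x) ` permutations_of_multiset (z - {#x#}). prod_list (map e l))
        = (\<Sum>l\<in>permutations_of_multiset (z - {#x#}). prod_list (map e (x # l)))"
      by (subst sum.reindex) auto
    also have "\<dots> = e x * LL e (z - {#x#})" by (simp add: LL_def sum_distrib_left)
    finally show "(\<Sum>l\<in>((#) x) ` permutations_of_multiset (z - {#x#}). prod_list (map e l)) = e x * LL e (z - {#x#})" .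
  qed
  finally show ?thesis .
qed

lemma LL_empty[simp]: "LL e {#} = 1" by (simp add: LL_def)

lemma Cons_SL_iff:
  "B # t \<in> SL n N z j \<longleftrightarrow> (B \<noteq> {} \<and> B \<subseteq> {1..N}) \<and>
     (if B \<inter> {1..n} = {} then (j > 0 \<and> t \<in> SL n N z (j - 1))
      else (B \<inter> {1..n} \<in># z \<and> t \<in> SL n N (z - {#B \<inter> {1..n}#}) j))"
proof -
  have a: "add_mset A X = z \<longleftrightarrow> A \<in># z \<and> X = z - {#A#}" for A X
    by (metis add_mset_remove_trivial insert_DiffM union_single_eq_member)
  show ?thesis unfolding SL_def by (auto simp: restr_Cons new_Cons a)
qed

lemma F_rec:
  assumes nN: "n \<le> N" and zv: "\<forall>A\<in>#z. A \<noteq> {} \<and> A \<subseteq> {1..n}" and nt: "\<not> (z = {#} \<and> j = 0)"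
  shows "FF n N w z j = (if j > 0 then DD n N w * FF n N w z (j - 1) else 0)
           + (\<Sum>A\<in>set_mset z. EE n N w A * FF n N w (z - {#A#}) j)"
proof -
  define H where "H = {B. B \<noteq> {} \<and> B \<subseteq> {1..N}}"
  define T where "T B = {t. B # t \<in> SL n N z j}" for B
  have fH: "finite H" unfolding H_def by (rule finite_subset[of _ "Pow {1..N}"]) auto
  have fT: "finite (T B)" for B
  proof -
    have "T B \<subseteq> tl ` SL n N z j" unfolding T_def by (auto intro: image_eqI[where x = "B # _"])
    then show ?thesis using finite_SL[of n N z j] by (metis finite_imageI finite_subset)
  qed
  have SLeq: "SL n N z j = (\<lambda>p. fst p # snd p) ` (SIGMA B:H. T B)"
  proof (rule set_eqI)
    fix l show "l \<in> SL n N z j \<longleftrightarrow> l \<in> (\<lambda>p. fst p # snd p) ` (SIGMA B:H. T B)"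
    proof (cases l)
      case Nil then show ?thesis using SL_Nil[of n N z j] nt by auto
    next
      case (Cons B t)
      have hB: "B \<in> H" if "B # t \<in> SL n N z j" using that unfolding SL_def H_def by auto
      show ?thesis
      proof
        assume "l \<in> SL n N z j"
        then have "(B, t) \<in> (SIGMA B:H. T B)" using hB by (simp add: T_def Cons)
        then show "l \<in> (\<lambda>p. fst p # snd p) ` (SIGMA B:H. T B)" by (rule image_eqI[rotated]) (simp add: Cons)
      next
        assume "l \<in> (\<lambda>p. fst p # snd p) ` (SIGMA B:H. T B)"
        then obtain p where p: "p \<in> (SIGMA B:H. T B)" "l = fst p # snd p" by blast
        then show "l \<in> SL n N z j" by (cases p) (simp add: T_def)
      qed
    qed
  qed
  have inj: "inj_on (\<lambda>p. fst p # snd p) (SIGMA B:H. T B)"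
    by (auto simp: inj_on_def)
  define G where "G B = (\<Sum>t\<in>T B. prod_list (map w t))" for B
  have "FF n N w z j = (\<Sum>p\<in>(SIGMA B:H. T B). prod_list (map w (fst p # snd p)))"
    unfolding FF_def SLeq by (rule sum.reindex[OF inj, unfolded comp_def])
  also have "\<dots> = (\<Sum>B\<in>H. \<Sum>t\<in>T B. w B * prod_list (map w t))"
    by (subst sum.Sigma[OF fH]) (auto simp: fT split_def)
  also have "\<dots> = (\<Sum>B\<in>H. w B * G B)"
    by (simp add: G_def sum_distrib_left)
  finally have F1: "FF n N w z j = (\<Sum>B\<in>H. w B * G B)" .
  have Gnew: "G B = (if j > 0 then FF n N w z (j - 1) else 0)" if "B \<in> H" "B \<inter> {1..n} = {}" for B
  proof -
    have "T B = (if j > 0 then SL n N z (j - 1) else {})"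
      using that unfolding T_def H_def by (auto simp: Cons_SL_iff)
    then show ?thesis by (simp add: G_def FF_def)
  qed
  have Gold: "G B = (if B \<inter> {1..n} \<in># z then FF n N w (z - {#B \<inter> {1..n}#}) j else 0)"
    if "B \<in> H" "B \<inter> {1..n} \<noteq> {}" for B
  proof -
    have "T B = (if B \<inter> {1..n} \<in># z then SL n N (z - {#B \<inter> {1..n}#}) j else {})"
      using that unfolding T_def H_def by (auto simp: Cons_SL_iff)
    then show ?thesis by (simp add: G_def FF_def)
  qed
  define H0 where "H0 = {B\<in>H. B \<inter> {1..n} = {}}"
  define H1 where "H1 = {B\<in>H. B \<inter> {1..n} \<noteq> {}}"
  have HU: "H = H0 \<union> H1" and HD: "H0 \<inter> H1 = {}" unfolding H0_def H1_def by auto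
  have fH0: "finite H0" and fH1: "finite H1" using fH unfolding H0_def H1_def by auto
  have "(\<Sum>B\<in>H. w B * G B) = (\<Sum>B\<in>H0. w B * G B) + (\<Sum>B\<in>H1. w B * G B)"
    unfolding HU by (rule sum.union_disjoint[OF fH0 fH1 HD])
  moreover have "(\<Sum>B\<in>H0. w B * G B) = (if j > 0 then DD n N w * FF n N w z (j - 1) else 0)"
  proof -
    have H0eq: "H0 = Pow {n<..N} - {{}}"
    proof (rule set_eqI)
      fix B :: "nat set"
      have "(B \<subseteq> {1..N} \<and> B \<inter> {1..n} = {}) \<longleftrightarrow> B \<subseteq> {n<..N}"
      proof
        assume h: "B \<subseteq> {1..N} \<and> B \<inter> {1..n} = {}"
        show "B \<subseteq> {n<..N}"
        proof
          fix x assume "x \<in> B"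
          then have "x \<in> {1..N}" "x \<notin> {1..n}" using h by auto
          then show "x \<in> {n<..N}" by auto
        qed
      next
        assume h: "B \<subseteq> {n<..N}"
        show "B \<subseteq> {1..N} \<and> B \<inter> {1..n} = {}"
        proof
          show "B \<subseteq> {1..N}" using h by auto
          show "B \<inter> {1..n} = {}" using h by auto
        qed
      qed
      then show "B \<in> H0 \<longleftrightarrow> B \<in> Pow {n<..N} - {{}}" unfolding H0_def H_def by auto
    qed
    have "(\<Sum>B\<in>H0. w B * G B) = (\<Sum>B\<in>H0. w B * (if j > 0 then FF n N w z (j - 1) else 0))"
      by (rule sum.cong[OF refl]) (simp add: Gnew H0_def)
    also have "\<dots> = (if j > 0 then DD n N w * FF n N w z (j - 1) else 0)"
      by (simp add: H0eq DD_def sum_distrib_right)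
    finally show ?thesis .
  qed
  moreover have "(\<Sum>B\<in>H1. w B * G B) = (\<Sum>A\<in>set_mset z. EE n N w A * FF n N w (z - {#A#}) j)"
  proof -
    define H2 where "H2 = {B\<in>H1. B \<inter> {1..n} \<in># z}"
    have "(\<Sum>B\<in>H1. w B * G B) = (\<Sum>B\<in>H2. w B * G B)"
      by (rule sum.mono_neutral_right[OF fH1]) (auto simp: H2_def Gold H1_def)
    also have "\<dots> = (\<Sum>B\<in>H2. w B * FF n N w (z - {#B \<inter> {1..n}#}) j)"
      by (rule sum.cong[OF refl]) (simp add: Gold H2_def H1_def)
    also have "\<dots> = (\<Sum>p\<in>set_mset z \<times> Pow {n<..N}. w (fst p \<union> snd p) * FF n N w (z - {#fst p#}) j)"
    proof -
      have Aprop: "A \<noteq> {} \<and> A \<subseteq> {1..n}" if "A \<in># z" for A using zv that by auto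
      have cap1: "(A \<union> C) \<inter> {1..n} = A" if "A \<in># z" "C \<subseteq> {n<..N}" for A C
        using Aprop[OF that(1)] that(2) by auto
      have cap2: "(A \<union> C) \<inter> {n<..N} = C" if "A \<in># z" "C \<subseteq> {n<..N}" for A C
        using Aprop[OF that(1)] that(2) by auto
      have img: "H2 = (\<lambda>p. fst p \<union> snd p) ` (set_mset z \<times> Pow {n<..N})"
      proof (rule set_eqI)
        fix B
        show "B \<in> H2 \<longleftrightarrow> B \<in> (\<lambda>p. fst p \<union> snd p) ` (set_mset z \<times> Pow {n<..N})"
        proof
          assume B: "B \<in> H2"
          have "B = (B \<inter> {1..n}) \<union> (B \<inter> {n<..N})" using B nN by (auto simp: H2_def H1_def H_def)
          moreover have "(B \<inter> {1..n}, B \<inter> {n<..N}) \<in> set_mset z \<times> Pow {n<..N}"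
            using B by (auto simp: H2_def)
          ultimately show "B \<in> (\<lambda>p. fst p \<union> snd p) ` (set_mset z \<times> Pow {n<..N})"
            by (intro image_eqI[where x = "(B \<inter> {1..n}, B \<inter> {n<..N})"]) auto
        next
          assume "B \<in> (\<lambda>p. fst p \<union> snd p) ` (set_mset z \<times> Pow {n<..N})"
          then obtain A C where AC: "A \<in># z" "C \<subseteq> {n<..N}" "B = A \<union> C" by auto
          show "B \<in> H2" using AC cap1[OF AC(1,2)] Aprop[OF AC(1)] nN
            unfolding H2_def H1_def H_def by auto
        qed
      qed
      have injAC: "inj_on (\<lambda>p. fst p \<union> snd p) (set_mset z \<times> Pow {n<..N})"
      proof (rule inj_onI)
        fix p q assume p: "p \<in> set_mset z \<times> Pow {n<..N}" and q: "q \<in> set_mset z \<times> Pow {n<..N}"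
          and e: "fst p \<union> snd p = fst q \<union> snd q"
        have "fst p = fst q" using cap1[of "fst p" "snd p"] cap1[of "fst q" "snd q"] p q e by auto
        moreover have "snd p = snd q" using cap2[of "fst p" "snd p"] cap2[of "fst q" "snd q"] p q e by auto
        ultimately show "p = q" by (simp add: prod_eq_iff)
      qed
      show ?thesis unfolding img
        apply (subst sum.reindex[OF injAC])
        apply (rule sum.cong[OF refl])
        subgoal for p using cap1[of "fst p" "snd p"] by (simp add: mem_Times_iff)
        done
    qed
    also have "\<dots> = (\<Sum>A\<in>set_mset z. \<Sum>C\<in>Pow {n<..N}. w (A \<union> C) * FF n N w (z - {#A#}) j)"
      by (simp add: sum.cartesian_product split_def)
    also have "\<dots> = (\<Sum>A\<in>set_mset z. EE n N w A * FF n N w (z - {#A#}) j)"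
      by (simp add: EE_def sum_distrib_right)
    finally show ?thesis .
  qed
  ultimately show ?thesis using F1 by simp
qed

lemma FF_empty_0: "FF n N w {#} 0 = 1"
  by (simp add: FF_def SL_empty_0)

lemma F_closed:
  assumes nN: "n \<le> N" and zv: "\<forall>A\<in>#z. A \<noteq> {} \<and> A \<subseteq> {1..n}"
  shows "FF n N w z j = real ((size z + j) choose j) * LL (EE n N w) z * DD n N w ^ j"
  using zv
proof (induction "size z + j" arbitrary: z j rule: less_induct)
  case less
  show ?case
  proof (cases "z = {#} \<and> j = 0")
    case True
    then show ?thesis by (simp add: FF_empty_0)
  next
    case False
    note rec = F_rec[OF nN less.prems False, of w]
    have zvA: "\<forall>B\<in>#z - {#A#}. B \<noteq> {} \<and> B \<subseteq> {1..n}" for A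
      using less.prems by (meson in_diffD)
    have sumpart: "(\<Sum>A\<in>set_mset z. EE n N w A * FF n N w (z - {#A#}) j)
        = (if z = {#} then 0 else real ((size z - 1 + j) choose j) * LL (EE n N w) z * DD n N w ^ j)"
    proof (cases "z = {#}")
      case True then show ?thesis by simp
    next
      case ne: False
      have "(\<Sum>A\<in>set_mset z. EE n N w A * FF n N w (z - {#A#}) j)
          = (\<Sum>A\<in>set_mset z. EE n N w A * (real ((size z - 1 + j) choose j) * LL (EE n N w) (z - {#A#}) * DD n N w ^ j))"
      proof (rule sum.cong[OF refl])
        fix A assume A: "A \<in> set_mset z"
        have sz: "size (z - {#A#}) = size z - 1" using A by (simp add: size_Diff_submset)
        have lt: "size (z - {#A#}) + j < size z + j" using A sz
          by (metis add_less_cancel_right diff_less less_one nonempty_has_size zero_less_iff_neq_zero ne)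
        show "EE n N w A * FF n N w (z - {#A#}) j
          = EE n N w A * (real ((size z - 1 + j) choose j) * LL (EE n N w) (z - {#A#}) * DD n N w ^ j)"
          using less.hyps[OF lt zvA[of A]] sz by simp
      qed
      also have "\<dots> = real ((size z - 1 + j) choose j) * DD n N w ^ j * (\<Sum>A\<in>set_mset z. EE n N w A * LL (EE n N w) (z - {#A#}))"
        by (simp add: sum_distrib_left algebra_simps)
      also have "\<dots> = real ((size z - 1 + j) choose j) * LL (EE n N w) z * DD n N w ^ j"
        using L_rec[OF ne, of "EE n N w"] by simp
      finally show ?thesis using ne by simp
    qed
    have firstpart: "(if j > 0 then DD n N w * FF n N w z (j - 1) else 0)
        = (if j > 0 then real ((size z + j - 1) choose (j - 1)) * LL (EE n N w) z * DD n N w ^ j else 0)"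
    proof (cases j)
      case 0 then show ?thesis by simp
    next
      case (Suc j')
      have lt: "size z + j' < size z + j" using Suc by simp
      show ?thesis using less.hyps[OF lt less.prems] Suc by simp
    qed
    show ?thesis
    proof (cases "z = {#}")
      case True
      then have "j > 0" using False by simp
      then show ?thesis using rec sumpart firstpart True by simp
    next
      case ne: False
      then have k: "size z \<ge> 1" by (simp add: Suc_leI nonempty_has_size)
      have pascal: "real ((size z + j) choose j) = (if j > 0 then real ((size z + j - 1) choose (j - 1)) else 0)
            + real ((size z - 1 + j) choose j)"
      proof (cases j)
        case 0 then show ?thesis by simp
      next
        case (Suc j')
        obtain M where M: "size z + j = Suc M" using k by (cases "size z + j") auto
        have "size z - 1 + j = M" using M k by simp
        then show ?thesis using Suc M by (simp add: binomial_Suc_Suc)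
      qed
      show ?thesis unfolding rec sumpart firstpart pascal using ne by (simp add: algebra_simps)
    qed
  qed
qed

lemma efpf_eq: "ibp_efpf \<gamma> \<alpha> \<theta> N l = 1 / fact (length l) * (\<gamma> / pochhammer (\<theta> + 1) (N - 1)) ^ length l
   * exp (- \<gamma> * g_fun N \<theta> \<alpha>) * prod_list (map (W \<alpha> \<theta> N) l)"
  unfolding ibp_efpf_def W_def by simp

lemma perms_length: "l \<in> permutations_of_multiset z \<Longrightarrow> length l = size z"
  by (metis permutations_of_multisetD size_mset)

lemma lik_eq: "ibp_lik \<gamma> \<alpha> \<theta> n z = 1 / fact (size z) * (\<gamma> / pochhammer (\<theta> + 1) (n - 1)) ^ size z
   * exp (- \<gamma> * g_fun n \<theta> \<alpha>) * LL (W \<alpha> \<theta> n) z"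
proof -
  have "ibp_lik \<gamma> \<alpha> \<theta> n z = (\<Sum>l\<in>permutations_of_multiset z. ibp_efpf \<gamma> \<alpha> \<theta> n l)"
    unfolding ibp_lik_def permutations_of_multiset_def ..
  also have "\<dots> = (\<Sum>l\<in>permutations_of_multiset z. 1 / fact (size z) * (\<gamma> / pochhammer (\<theta> + 1) (n - 1)) ^ size z
     * exp (- \<gamma> * g_fun n \<theta> \<alpha>) * prod_list (map (W \<alpha> \<theta> n) l))"
    by (rule sum.cong[OF refl]) (simp add: efpf_eq perms_length)
  also have "\<dots> = 1 / fact (size z) * (\<gamma> / pochhammer (\<theta> + 1) (n - 1)) ^ size z
   * exp (- \<gamma> * g_fun n \<theta> \<alpha>) * LL (W \<alpha> \<theta> n) z"
    by (simp add: LL_def sum_distrib_left)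
  finally show ?thesis .
qed

lemma prod_list_map_scale: "prod_list (map (\<lambda>A. f A * (c::real)) l) = prod_list (map f l) * c ^ length l"
  by (induction l) (auto simp: algebra_simps)

lemma LL_EE:
  assumes zv: "\<forall>A\<in>#z. A \<noteq> {} \<and> A \<subseteq> {1..n}"
  shows "LL (EE n (n+m) (W \<alpha> \<theta> (n+m))) z = pochhammer (\<theta> + real n) m ^ size z * LL (W \<alpha> \<theta> n) z"
proof -
  have "LL (EE n (n+m) (W \<alpha> \<theta> (n+m))) z
     = (\<Sum>l\<in>permutations_of_multiset z. prod_list (map (\<lambda>A. W \<alpha> \<theta> n A * pochhammer (\<theta> + real n) m) l))"
    unfolding LL_def
  proof (rule sum.cong[OF refl])
    fix l assume l: "l \<in> permutations_of_multiset z"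
    then have sl: "set l = set_mset z" by (metis permutations_of_multisetD set_mset_mset)
    show "prod_list (map (EE n (n+m) (W \<alpha> \<theta> (n+m))) l) = prod_list (map (\<lambda>A. W \<alpha> \<theta> n A * pochhammer (\<theta> + real n) m) l)"
    proof (rule arg_cong[where f = prod_list], rule map_cong[OF refl])
      fix A assume "A \<in> set l"
      then have "A \<in># z" using sl by simp
      then have h: "A \<subseteq> {1..n}" "A \<noteq> {}" using zv by blast+
      show "EE n (n+m) (W \<alpha> \<theta> (n+m)) A = W \<alpha> \<theta> n A * pochhammer (\<theta> + real n) m"
        unfolding EE_def by (rule E_lemma[OF h])
    qed
  qed
  also have "\<dots> = pochhammer (\<theta> + real n) m ^ size z * LL (W \<alpha> \<theta> n) z"
    by (simp add: prod_list_map_scale LL_def sum_distrib_left perms_length mult.commute cong: sum.cong)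
  finally show ?thesis .
qed

lemma SL_ofa: "{l \<in> ofa N. restr n l = z \<and> new_feats n l = j} = SL n N z j"
  by (auto simp: ofa_def SL_def)

lemma poch_pos: "x > 0 \<Longrightarrow> pochhammer (x::real) k > 0"
  by (simp add: pochhammer_pos)

lemma sum_SL_efpf:
  assumes a1: "\<alpha> < 1" and a2: "\<theta> + \<alpha> > 0"
    and zv: "\<forall>A\<in>#z. A \<noteq> {} \<and> A \<subseteq> {1..n}"
  shows "(\<Sum>l\<in>SL n (n+m) z j. ibp_efpf \<gamma> \<alpha> \<theta> (n+m) l)
     = ibp_lik \<gamma> \<alpha> \<theta> n z * (exp (- \<gamma> * (g_fun (n+m) \<theta> \<alpha> - g_fun n \<theta> \<alpha>))
         * (\<gamma> * (g_fun (n+m) \<theta> \<alpha> - g_fun n \<theta> \<alpha>)) ^ j / fact j)"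
proof -
  define k where "k = size z"
  define PN where "PN = pochhammer (\<theta> + 1) (n + m - 1)"
  define Pn where "Pn = pochhammer (\<theta> + 1) (n - 1)"
  define R where "R = pochhammer (\<theta> + real n) m"
  define \<Delta> where "\<Delta> = g_fun (n+m) \<theta> \<alpha> - g_fun n \<theta> \<alpha>"
  define S where "S = LL (W \<alpha> \<theta> n) z"
  have th1: "\<theta> + 1 > 0" using a1 a2 by simp
  have PNpos: "PN > 0" and Pnpos: "Pn > 0" unfolding PN_def Pn_def using th1 by (auto intro: poch_pos)
  have RP: "R ^ k * Pn ^ k = PN ^ k"
  proof (cases "k = 0")
    case True then show ?thesis by simp
  next
    case False
    then have "z \<noteq> {#}" unfolding k_def by auto
    then obtain A where A: "A \<in># z" by (meson multiset_nonemptyE)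
    then have h: "A \<subseteq> {1..n}" "A \<noteq> {}" using zv by blast+
    then obtain x where "x \<in> A" by blast
    then have "x \<in> {1..n}" using h by blast
    then have n1: "n \<ge> 1" by simp
    have "PN = Pn * R" unfolding PN_def Pn_def R_def
      using pochhammer_product'[of "\<theta> + 1" "n - 1" m] n1 by (simp add: algebra_simps)
    then show ?thesis by (simp add: power_mult_distrib mult.commute)
  qed
  have "(\<Sum>l\<in>SL n (n+m) z j. ibp_efpf \<gamma> \<alpha> \<theta> (n+m) l)
      = (\<Sum>l\<in>SL n (n+m) z j. 1 / fact (k + j) * (\<gamma> / PN) ^ (k + j)
          * exp (- \<gamma> * g_fun (n+m) \<theta> \<alpha>) * prod_list (map (W \<alpha> \<theta> (n+m)) l))"
    by (rule sum.cong[OF refl]) (simp add: efpf_eq length_SL k_def PN_def)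
  also have "\<dots> = 1 / fact (k + j) * (\<gamma> / PN) ^ (k + j) * exp (- \<gamma> * g_fun (n+m) \<theta> \<alpha>)
         * FF n (n+m) (W \<alpha> \<theta> (n+m)) z j"
    by (simp add: FF_def sum_distrib_left)
  also have "FF n (n+m) (W \<alpha> \<theta> (n+m)) z j = real ((k + j) choose j) * (R ^ k * S) * (PN * \<Delta>) ^ j"
    using F_closed[where N="n+m" and w="W \<alpha> \<theta> (n+m)" and j=j, OF _ zv] LL_EE[where m=m and \<alpha>=\<alpha> and \<theta>=\<theta>, OF zv]
      D_lemma[where n=n and m=m and \<alpha>=\<alpha> and \<theta>=\<theta>, OF th1]
    by (simp add: k_def R_def S_def PN_def \<Delta>_def DD_def)
  finally have L: "(\<Sum>l\<in>SL n (n+m) z j. ibp_efpf \<gamma> \<alpha> \<theta> (n+m) l)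
     = 1 / fact (k + j) * (\<gamma> / PN) ^ (k + j) * exp (- \<gamma> * g_fun (n+m) \<theta> \<alpha>)
         * (real ((k + j) choose j) * (R ^ k * S) * (PN * \<Delta>) ^ j)" .
  have Rl: "ibp_lik \<gamma> \<alpha> \<theta> n z = 1 / fact k * (\<gamma> / Pn) ^ k * exp (- \<gamma> * g_fun n \<theta> \<alpha>) * S"
    unfolding lik_eq k_def Pn_def S_def ..
  have bin: "real ((k + j) choose j) = fact (k + j) / (fact k * fact j)"
    by (simp add: binomial_fact)
  have ex: "exp (- \<gamma> * g_fun (n+m) \<theta> \<alpha>) = exp (- \<gamma> * g_fun n \<theta> \<alpha>) * exp (- \<gamma> * \<Delta>)"
    by (simp add: \<Delta>_def exp_add[symmetric] algebra_simps)
  have "1 / fact (k + j) * (\<gamma> / PN) ^ (k + j) * exp (- \<gamma> * g_fun (n+m) \<theta> \<alpha>)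
         * (real ((k + j) choose j) * (R ^ k * S) * (PN * \<Delta>) ^ j)
      = 1 / fact k * (\<gamma> ^ k * (R ^ k / PN ^ k)) * exp (- \<gamma> * g_fun n \<theta> \<alpha>) * S
          * (exp (- \<gamma> * \<Delta>) * (\<gamma> * \<Delta>) ^ j / fact j)"
    unfolding bin ex using PNpos
    by (simp add: power_add power_divide power_mult_distrib field_simps)
  also have "R ^ k / PN ^ k = 1 / Pn ^ k"
    using RP PNpos Pnpos by (simp add: field_simps)
  finally show ?thesis unfolding L Rl \<Delta>_def[symmetric]
    by (simp add: power_divide)
qed

lemma gd_measurable[measurable]: "gamma_density a b \<in> borel_measurable borel"
  unfolding gamma_density_def by measurable

lemma gd_nonneg: "a > 0 \<Longrightarrow> gamma_density a b x \<ge> 0"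
  by (simp add: gamma_density_def Gamma_real_pos)

lemma gd_nonpos[simp]: "x \<le> 0 \<Longrightarrow> gamma_density a b x = 0"
  by (simp add: gamma_density_def)

lemma gd_nn_integral:
  assumes a: "a > 0" and b: "b > 0"
  shows "(\<integral>\<^sup>+x. ennreal (gamma_density a b x) \<partial>lborel) = 1"
proof -
  define f where "f t = ennreal (indicator {0..} t * t powr (a - 1) / exp t)" for t :: real
  have fm[measurable]: "f \<in> borel_measurable borel" unfolding f_def by measurable
  have G: "ennreal (Gamma a) = (\<integral>\<^sup>+t. f t \<partial>lborel)"
    unfolding f_def using Gamma_conv_nn_integral_real[OF a] by simp
  also have "\<dots> = ennreal b * (\<integral>\<^sup>+x. f (0 + b * x) \<partial>lborel)"
    using nn_integral_real_affine[OF fm, of b 0] b by simp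
  finally have G2: "ennreal (Gamma a) = ennreal b * (\<integral>\<^sup>+x. f (b * x) \<partial>lborel)" by simp
  have Gpos: "Gamma a > 0" using a by (rule Gamma_real_pos)
  have pt: "ennreal (gamma_density a b x) = ennreal (b / Gamma a) * f (b * x)" for x
  proof (cases "x > 0")
    case True
    have "(b * x) powr (a - 1) = b powr (a - 1) * x powr (a - 1)"
      using True b by (simp add: powr_mult)
    moreover have "b powr a = b * b powr (a - 1)"
      using b by (simp add: powr_diff)
    ultimately have "gamma_density a b x = b / Gamma a * ((b * x) powr (a - 1) / exp (b * x))"
      using True by (simp add: gamma_density_def exp_minus field_simps)
    then show ?thesis using True b Gpos
      by (simp add: f_def ennreal_mult[symmetric] indicator_def)
  next
    case False
    then have "b * x \<le> 0" using b by (simp add: mult_nonneg_nonpos)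
    then have "f (b * x) = 0" unfolding f_def by (cases "b * x = 0") (auto simp: indicator_def)
    then show ?thesis using False by simp
  qed
  have "(\<integral>\<^sup>+x. ennreal (gamma_density a b x) \<partial>lborel) = ennreal (b / Gamma a) * (\<integral>\<^sup>+x. f (b * x) \<partial>lborel)"
    unfolding pt by (rule nn_integral_cmult) measurable
  also have "\<dots> = ennreal (1 / Gamma a) * (ennreal b * (\<integral>\<^sup>+x. f (b * x) \<partial>lborel))"
    using b Gpos by (simp add: ennreal_mult[symmetric] mult.assoc[symmetric])
  also have "\<dots> = ennreal (1 / Gamma a) * ennreal (Gamma a)" unfolding G2 ..
  also have "\<dots> = 1" using Gpos by (simp add: ennreal_mult[symmetric])
  finally show ?thesis .
qed

lemma gd_integrable:
  assumes "a > 0" "b > 0"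
  shows "integrable lborel (gamma_density a b)"
  by (rule integrableI_nn_integral_finite[where x=1]) (use assms gd_nonneg gd_nn_integral in auto)

lemma gd_integral:
  assumes "a > 0" "b > 0"
  shows "(\<integral>x. gamma_density a b x \<partial>lborel) = 1"
  using assms by (subst integral_eq_nn_integral) (auto simp: gd_nonneg gd_nn_integral)

lemma gd_bounded_integrable:
  assumes "a > 0" "b > 0" and hm[measurable]: "h \<in> borel_measurable borel" and hb: "\<And>x. \<bar>h x\<bar> \<le> 1"
  shows "integrable lborel (\<lambda>x. h x * gamma_density a b x)"
proof (rule Bochner_Integration.integrable_bound[OF gd_integrable[OF assms(1,2)]])
  show "(\<lambda>x. h x * gamma_density a b x) \<in> borel_measurable lborel" by measurable
  show "AE x in lborel. norm (h x * gamma_density a b x) \<le> norm (gamma_density a b x)"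
    using hb gd_nonneg[OF assms(1)]
    by (auto simp: abs_mult intro!: mult_left_le_one_le)
qed

lemma gd_kernel:
  assumes a: "a > 0" and b: "b > 0" and G: "G \<ge> 0"
  shows "c * x ^ k * exp (- x * G) * gamma_density a b x
     = (c * b powr a * Gamma (a + real k) / (Gamma a * (b + G) powr (a + real k))) * gamma_density (a + real k) (b + G) x"
proof (cases "x > 0")
  case True
  have Gpos: "Gamma a > 0" "Gamma (a + real k) > 0" using a by (auto intro: Gamma_real_pos)
  have bG: "b + G > 0" using b G by simp
  define P where "P = x ^ k * x powr (a - 1)"
  define E where "E = exp (- x * G) * exp (- b * x)"
  have h1: "P = x powr (a + real k - 1)"
    using True by (simp add: P_def powr_realpow[symmetric] powr_add[symmetric] algebra_simps)
  have h2: "E = exp (- (b + G) * x)"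
    by (simp add: E_def exp_add[symmetric] algebra_simps)
  have L: "c * x ^ k * exp (- x * G) * gamma_density a b x = c * b powr a / Gamma a * (P * E)"
    using True by (simp add: gamma_density_def P_def E_def)
  have R: "gamma_density (a + real k) (b + G) x = (b + G) powr (a + real k) / Gamma (a + real k) * (P * E)"
    using True by (simp add: gamma_density_def h1 h2)
  have bGp: "(b + G) powr (a + real k) > 0" using bG by simp
  show ?thesis unfolding L R using Gpos bGp by (simp add: field_simps)
next
  case False
  then show ?thesis by simp
qed

lemma distr_gamma_scale:
  assumes a: "a > 0" and b: "b > 0" and s: "s > 0"
  shows "distr (gamma_measure a b) borel (\<lambda>x. x * s) = gamma_measure a (b / s)"
proof (rule measure_eqI)
  show "sets (distr (gamma_measure a b) borel (\<lambda>x. x * s)) = sets (gamma_measure a (b / s))"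
    by (simp add: gamma_measure_def)
  fix A assume A: "A \<in> sets (distr (gamma_measure a b) borel (\<lambda>x. x * s))"
  then have Ab[measurable]: "A \<in> sets borel" by simp
  have pt: "ennreal (gamma_density a (b / s) (s * x)) * indicator A (s * x)
      = ennreal (1 / s) * (ennreal (gamma_density a b x) * indicator ((\<lambda>x. x * s) -` A) x)" for x
  proof (cases "x > 0")
    case True
    have "gamma_density a (b / s) (s * x) = 1 / s * gamma_density a b x"
    proof -
      have k: "(b / s) powr a * (s * x) powr (a - 1) = b powr a * x powr (a - 1) / s"
        using b s True by (simp add: powr_divide powr_mult powr_diff field_simps)
      have e: "exp (- (b / s) * (s * x)) = exp (- b * x)" using s by simp
      have "gamma_density a (b / s) (s * x) = ((b / s) powr a * (s * x) powr (a - 1)) * exp (- (b / s) * (s * x)) / Gamma a"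
        using True s by (simp add: gamma_density_def)
      also have "\<dots> = 1 / s * gamma_density a b x"
        unfolding k e using True by (simp add: gamma_density_def)
      finally show ?thesis .
    qed
    moreover have "ennreal (1 / s) * ennreal (gamma_density a b x) = ennreal (1 / s * gamma_density a b x)"
      using s gd_nonneg[OF a, of b x] by (subst ennreal_mult[symmetric]) auto
    ultimately show ?thesis by (simp add: indicator_def mult.commute)
  next
    case False
    then have "s * x \<le> 0" using s by (simp add: mult_nonneg_nonpos)
    then show ?thesis using False by simp
  qed
  have "emeasure (gamma_measure a (b / s)) A = (\<integral>\<^sup>+y. ennreal (gamma_density a (b / s) y) * indicator A y \<partial>lborel)"
    unfolding gamma_measure_def by (subst emeasure_density) auto
  also have "\<dots> = ennreal s * (\<integral>\<^sup>+x. ennreal (gamma_density a (b / s) (0 + s * x)) * indicator A (0 + s * x) \<partial>lborel)"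
    using s by (subst nn_integral_real_affine[where c = s and t = 0]) auto
  also have "\<dots> = ennreal s * (ennreal (1 / s) * (\<integral>\<^sup>+x. ennreal (gamma_density a b x) * indicator ((\<lambda>x. x * s) -` A) x \<partial>lborel))"
    by (simp add: pt nn_integral_cmult)
  also have "\<dots> = (\<integral>\<^sup>+x. ennreal (gamma_density a b x) * indicator ((\<lambda>x. x * s) -` A) x \<partial>lborel)"
    using s by (simp add: ennreal_mult[symmetric] mult.assoc[symmetric])
  also have "\<dots> = emeasure (distr (gamma_measure a b) borel (\<lambda>x. x * s)) A"
  proof -
    have fm: "(\<lambda>x. x * s) \<in> borel_measurable borel" by measurable
    have "(\<lambda>x. x * s) -` A \<inter> space borel \<in> sets borel" by (rule measurable_sets[OF fm Ab])
    then have pre: "(\<lambda>x. x * s) -` A \<in> sets lborel" by simp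
    show ?thesis unfolding gamma_measure_def
      by (subst emeasure_distr) (auto simp: emeasure_density[OF _ pre])
  qed
  finally show "emeasure (distr (gamma_measure a b) borel (\<lambda>x. x * s)) A = emeasure (gamma_measure a (b / s)) A" ..
qed

definition pois :: "real \<Rightarrow> nat \<Rightarrow> real" where
  "pois \<mu> j = exp (- \<mu>) * \<mu> ^ j / fact j"

lemma pois_nonneg: "\<mu> \<ge> 0 \<Longrightarrow> pois \<mu> j \<ge> 0"
  by (simp add: pois_def)

lemma pois_sums: "pois \<mu> sums 1"
proof -
  have "(\<lambda>j. exp (- \<mu>) * (\<mu> ^ j /\<^sub>R fact j)) sums (exp (- \<mu>) * exp \<mu>)"
    by (rule sums_mult[OF exp_converges])
  moreover have "(\<lambda>j. exp (- \<mu>) * (\<mu> ^ j /\<^sub>R fact j)) = pois \<mu>"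
    by (rule ext) (simp add: pois_def divide_inverse mult_ac)
  moreover have "exp (- \<mu>) * exp \<mu> = 1" by (simp add: exp_minus_inverse mult.commute)
  ultimately show ?thesis by simp
qed

lemma pois_has_sum: "\<mu> \<ge> 0 \<Longrightarrow> (pois \<mu> has_sum 1) UNIV"
  by (rule sums_nonneg_imp_has_sum[OF pois_sums]) (simp add: pois_nonneg)

lemma prod_list_pos': "(\<And>x. x \<in> set l \<Longrightarrow> f x > (0::real)) \<Longrightarrow> prod_list (map f l) > 0"
  by (induction l) auto

lemma W_pos: "\<alpha> < 1 \<Longrightarrow> \<theta> + \<alpha> > 0 \<Longrightarrow> W \<alpha> \<theta> N B > 0"
  unfolding W_def by (intro mult_pos_pos pochhammer_pos) auto

lemma g_nonneg: "\<alpha> < 1 \<Longrightarrow> \<theta> + \<alpha> > 0 \<Longrightarrow> g_fun n \<theta> \<alpha> \<ge> 0"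
  unfolding g_fun_def by (intro sum_nonneg divide_nonneg_nonneg less_imp_le pochhammer_pos) auto

lemma g_term_pos: "(\<alpha>::real) < 1 \<Longrightarrow> \<theta> + \<alpha> > 0 \<Longrightarrow> pochhammer (\<theta> + \<alpha>) k / pochhammer (\<theta> + 1) k > 0"
  using pochhammer_pos[of "\<theta> + \<alpha>" k] pochhammer_pos[of "\<theta> + 1" k] by simp

lemma g_mono: "\<alpha> < 1 \<Longrightarrow> \<theta> + \<alpha> > 0 \<Longrightarrow> g_fun n \<theta> \<alpha> \<le> g_fun (n + m) \<theta> \<alpha>"
  unfolding g_fun_def
  by (intro sum_mono2) (auto intro: less_imp_le[OF g_term_pos])

definition cz :: "real \<Rightarrow> real \<Rightarrow> nat \<Rightarrow> nat set multiset \<Rightarrow> real" where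
  "cz \<alpha> \<theta> n z = 1 / fact (size z) * (1 / pochhammer (\<theta> + 1) (n - 1)) ^ size z * LL (W \<alpha> \<theta> n) z"

lemma lik_form: "ibp_lik \<gamma> \<alpha> \<theta> n z = cz \<alpha> \<theta> n z * \<gamma> ^ size z * exp (- \<gamma> * g_fun n \<theta> \<alpha>)"
proof -
  have "(\<gamma> / pochhammer (\<theta> + 1) (n - 1)) ^ size z = \<gamma> ^ size z * (1 / pochhammer (\<theta> + 1) (n - 1)) ^ size z"
    by (simp add: power_divide)
  then show ?thesis unfolding lik_eq cz_def by (simp only: mult_ac)
qed

lemma cz_pos:
  assumes "\<alpha> < 1" "\<theta> + \<alpha> > 0"
  shows "cz \<alpha> \<theta> n z > 0"
proof -
  have "LL (W \<alpha> \<theta> n) z > 0" unfolding LL_def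
    by (intro sum_pos prod_list_pos' W_pos assms) auto
  moreover have "pochhammer (\<theta> + 1) (n - 1) > 0" using assms by (intro pochhammer_pos) auto
  ultimately show ?thesis unfolding cz_def by simp
qed

definition KK :: "real \<Rightarrow> real \<Rightarrow> real \<Rightarrow> real \<Rightarrow> nat \<Rightarrow> nat set multiset \<Rightarrow> real" where
  "KK a b \<alpha> \<theta> n z = cz \<alpha> \<theta> n z * b powr a * Gamma (a + real (size z))
      / (Gamma a * (b + g_fun n \<theta> \<alpha>) powr (a + real (size z)))"

lemma KK_pos:
  assumes "a > 0" "b > 0" "\<alpha> < 1" "\<theta> + \<alpha> > 0"
  shows "KK a b \<alpha> \<theta> n z > 0"
proof -
  have "b + g_fun n \<theta> \<alpha> > 0" using g_nonneg[OF assms(3,4), of n] assms by simp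
  then show ?thesis unfolding KK_def using assms cz_pos[OF assms(3,4)]
    by (intro divide_pos_pos mult_pos_pos Gamma_real_pos) auto
qed

lemma lik_gd:
  assumes "a > 0" "b > 0" "\<alpha> < 1" "\<theta> + \<alpha> > 0"
  shows "ibp_lik \<gamma> \<alpha> \<theta> n z * gamma_density a b \<gamma>
     = KK a b \<alpha> \<theta> n z * gamma_density (a + real (size z)) (b + g_fun n \<theta> \<alpha>) \<gamma>"
  unfolding lik_form KK_def
  by (rule gd_kernel) (use assms g_nonneg in auto)

lemma posterior_eq:
  assumes "a > 0" "b > 0" "\<alpha> < 1" "\<theta> + \<alpha> > 0"
  shows "posterior a b \<alpha> \<theta> n z = gamma_measure (a + real (size z)) (b + g_fun n \<theta> \<alpha>)"
proof -
  have bG: "b + g_fun n \<theta> \<alpha> > 0" using g_nonneg[OF assms(3,4), of n] assms by simp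
  have Z: "(\<integral>t. ibp_lik t \<alpha> \<theta> n z * gamma_density a b t \<partial>lborel) = KK a b \<alpha> \<theta> n z"
    unfolding lik_gd[OF assms] using gd_integral[of "a + real (size z)" "b + g_fun n \<theta> \<alpha>"] assms bG
    by simp
  show ?thesis unfolding posterior_def gamma_measure_def Z lik_gd[OF assms]
    using KK_pos[OF assms, of n z] gd_integral[of "a + real (size z)" "b + g_fun n \<theta> \<alpha>"] assms bG by simp
qed

lemma pois_measurable[measurable]: "(\<lambda>x. pois (f x) j) \<in> borel_measurable borel"
  if [measurable]: "f \<in> borel_measurable borel"
  unfolding pois_def by measurable

lemma pois_sum_le1: "\<mu> \<ge> 0 \<Longrightarrow> finite A \<Longrightarrow> sum (pois \<mu>) A \<le> 1"
  using sum_le_suminf[of "pois \<mu>" A] sums_summable[OF pois_sums] sums_unique[OF pois_sums]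
  by (simp add: pois_nonneg)

lemma pois_le1: "\<mu> \<ge> 0 \<Longrightarrow> pois \<mu> j \<le> 1"
  using pois_sum_le1[of \<mu> "{j}"] by simp

lemma gd_bounded_integrable':
  assumes "a > 0" "b > 0" and hm[measurable]: "h \<in> borel_measurable borel" and hb: "\<And>x. x > 0 \<Longrightarrow> \<bar>h x\<bar> \<le> 1"
  shows "integrable lborel (\<lambda>x. h x * gamma_density a b x)"
proof (rule Bochner_Integration.integrable_bound[OF gd_integrable[OF assms(1,2)]])
  show "(\<lambda>x. h x * gamma_density a b x) \<in> borel_measurable lborel" by measurable
  show "AE x in lborel. norm (h x * gamma_density a b x) \<le> norm (gamma_density a b x)"
  proof (rule AE_I2)
    fix x show "norm (h x * gamma_density a b x) \<le> norm (gamma_density a b x)"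
    proof (cases "x > 0")
      case True then show ?thesis using hb[OF True] gd_nonneg[OF assms(1), of b x]
        by (auto simp: abs_mult intro!: mult_left_le_one_le)
    qed simp
  qed
qed

lemma efpf_nonneg:
  assumes "\<gamma> \<ge> 0" "\<alpha> < 1" "\<theta> + \<alpha> > 0"
  shows "ibp_efpf \<gamma> \<alpha> \<theta> N l \<ge> 0"
proof -
  have "prod_list (map (W \<alpha> \<theta> N) l) > 0" by (intro prod_list_pos' W_pos assms)
  moreover have "pochhammer (\<theta> + 1) (N - 1) > 0" using assms by (intro pochhammer_pos) auto
  ultimately show ?thesis unfolding efpf_eq using assms by simp
qed

definition dl :: "nat \<Rightarrow> nat \<Rightarrow> real \<Rightarrow> real \<Rightarrow> real" where
  "dl n m \<theta> \<alpha> = g_fun (n+m) \<theta> \<alpha> - g_fun n \<theta> \<alpha>"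

lemma dl_nonneg: "\<alpha> < 1 \<Longrightarrow> \<theta> + \<alpha> > 0 \<Longrightarrow> dl n m \<theta> \<alpha> \<ge> 0"
  unfolding dl_def using g_mono[of \<alpha> \<theta> n m] by simp

lemma sum_SL_pois:
  assumes "\<alpha> < 1" "\<theta> + \<alpha> > 0" "\<forall>A\<in>#z. A \<noteq> {} \<and> A \<subseteq> {1..n}"
  shows "(\<Sum>l\<in>SL n (n+m) z j. ibp_efpf \<gamma> \<alpha> \<theta> (n+m) l) = ibp_lik \<gamma> \<alpha> \<theta> n z * pois (\<gamma> * dl n m \<theta> \<alpha>) j"
  unfolding sum_SL_efpf[OF assms] by (simp add: pois_def dl_def)

lemma SL_disj: "disjoint_family_on (SL n N z) UNIV"
  unfolding disjoint_family_on_def SL_def by auto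

lemma has_sum_union:
  assumes "\<gamma> > 0" and a: "\<alpha> < 1" "\<theta> + \<alpha> > 0" and zv: "\<forall>A\<in>#z. A \<noteq> {} \<and> A \<subseteq> {1..n}"
  shows "(ibp_efpf \<gamma> \<alpha> \<theta> (n+m) has_sum ibp_lik \<gamma> \<alpha> \<theta> n z) (\<Union>j. SL n (n+m) z j)"
proof -
  define F where "F j = ibp_lik \<gamma> \<alpha> \<theta> n z * pois (\<gamma> * dl n m \<theta> \<alpha>) j" for j
  define f where "f = ibp_efpf \<gamma> \<alpha> \<theta> (n+m)"
  have fib: "(f has_sum F j) (SL n (n+m) z j)" for j
    unfolding f_def F_def by (rule has_sum_finiteI[OF finite_SL]) (simp add: sum_SL_pois[OF a zv])
  have mu: "\<gamma> * dl n m \<theta> \<alpha> \<ge> 0" using assms dl_nonneg[OF a] by simp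
  have Fs: "(F has_sum ibp_lik \<gamma> \<alpha> \<theta> n z) UNIV"
    unfolding F_def using has_sum_cmult_right[OF pois_has_sum[OF mu], of "ibp_lik \<gamma> \<alpha> \<theta> n z"] by simp
  have nn: "f l \<ge> 0" for l unfolding f_def using assms by (intro efpf_nonneg) auto
  have summ: "f summable_on (\<Union>j. SL n (n+m) z j)"
    by (rule summable_on_UnionI[where g = F]) (use fib Fs nn SL_disj in \<open>auto dest: has_sum_imp_summable\<close>)
  have inj: "inj_on snd (SIGMA j:UNIV. SL n (n+m) z j)"
    using SL_disj[of n "n+m" z] unfolding disjoint_family_on_def inj_on_def by auto
  have img: "(\<Union>j. SL n (n+m) z j) = snd ` (SIGMA j:UNIV. SL n (n+m) z j)" by force
  have summ2: "(f \<circ> snd) summable_on (SIGMA j:UNIV. SL n (n+m) z j)"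
    using summ unfolding img summable_on_reindex[OF inj] .
  have "((f \<circ> snd) has_sum ibp_lik \<gamma> \<alpha> \<theta> n z) (SIGMA j:UNIV. SL n (n+m) z j)"
    by (rule has_sum_SigmaI[OF _ Fs summ2]) (simp add: fib)
  then show ?thesis unfolding f_def[symmetric] img has_sum_reindex[OF inj] .
qed

lemma set_single: "{l \<in> ofa N. restr n l = z \<and> new_feats n l \<in> {j}} = SL n N z j"
  using SL_ofa[of N n z j] by simp

lemma set_univ: "{l \<in> ofa N. restr n l = z \<and> new_feats n l \<in> UNIV} = (\<Union>j. SL n N z j)"
  by (auto simp: SL_def ofa_def)

lemma mix_single:
  assumes "a > 0" "b > 0" and a: "\<alpha> < 1" "\<theta> + \<alpha> > 0" and zv: "\<forall>A\<in>#z. A \<noteq> {} \<and> A \<subseteq> {1..n}"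
  shows "mix_joint a b \<alpha> \<theta> n m z {j} = KK a b \<alpha> \<theta> n z *
     (\<integral>\<gamma>. pois (\<gamma> * dl n m \<theta> \<alpha>) j * gamma_density (a + real (size z)) (b + g_fun n \<theta> \<alpha>) \<gamma> \<partial>lborel)"
proof -
  have "mix_joint a b \<alpha> \<theta> n m z {j} = (\<integral>\<gamma>. KK a b \<alpha> \<theta> n z *
     (pois (\<gamma> * dl n m \<theta> \<alpha>) j * gamma_density (a + real (size z)) (b + g_fun n \<theta> \<alpha>) \<gamma>) \<partial>lborel)"
    unfolding mix_joint_def set_single
  proof (rule Bochner_Integration.integral_cong[OF refl])
    fix \<gamma>
    have "(\<Sum>\<^sub>\<infinity>l\<in>SL n (n + m) z j. ibp_efpf \<gamma> \<alpha> \<theta> (n + m) l) = ibp_lik \<gamma> \<alpha> \<theta> n z * pois (\<gamma> * dl n m \<theta> \<alpha>) j"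
      using sum_SL_pois[OF a zv] finite_SL by simp
    then show "(\<Sum>\<^sub>\<infinity>l\<in>SL n (n + m) z j. ibp_efpf \<gamma> \<alpha> \<theta> (n + m) l) * gamma_density a b \<gamma>
      = KK a b \<alpha> \<theta> n z * (pois (\<gamma> * dl n m \<theta> \<alpha>) j * gamma_density (a + real (size z)) (b + g_fun n \<theta> \<alpha>) \<gamma>)"
      using lik_gd[OF assms(1,2) a, of \<gamma> n z] by (simp add: mult_ac)
  qed
  then show ?thesis by simp
qed

lemma mix_univ:
  assumes ab: "a > 0" "b > 0" and a: "\<alpha> < 1" "\<theta> + \<alpha> > 0" and zv: "\<forall>A\<in>#z. A \<noteq> {} \<and> A \<subseteq> {1..n}"
  shows "mix_joint a b \<alpha> \<theta> n m z UNIV = KK a b \<alpha> \<theta> n z"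
proof -
  have bG: "b + g_fun n \<theta> \<alpha> > 0" using g_nonneg[OF a, of n] ab by simp
  have "mix_joint a b \<alpha> \<theta> n m z UNIV = (\<integral>\<gamma>. KK a b \<alpha> \<theta> n z *
      gamma_density (a + real (size z)) (b + g_fun n \<theta> \<alpha>) \<gamma> \<partial>lborel)"
    unfolding mix_joint_def set_univ
  proof (rule Bochner_Integration.integral_cong[OF refl])
    fix \<gamma>
    show "(\<Sum>\<^sub>\<infinity>l\<in>(\<Union>j. SL n (n + m) z j). ibp_efpf \<gamma> \<alpha> \<theta> (n + m) l) * gamma_density a b \<gamma>
      = KK a b \<alpha> \<theta> n z * gamma_density (a + real (size z)) (b + g_fun n \<theta> \<alpha>) \<gamma>"
    proof (cases "\<gamma> > 0")
      case True
      have "(\<Sum>\<^sub>\<infinity>l\<in>(\<Union>j. SL n (n + m) z j). ibp_efpf \<gamma> \<alpha> \<theta> (n + m) l) = ibp_lik \<gamma> \<alpha> \<theta> n z"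
        by (rule infsumI[OF has_sum_union[where m=m, OF True a zv]])
      then show ?thesis using lik_gd[OF ab a, of \<gamma> n z] by simp
    qed simp
  qed
  also have "\<dots> = KK a b \<alpha> \<theta> n z" using gd_integral[of "a + real (size z)" "b + g_fun n \<theta> \<alpha>"] ab bG by simp
  finally show ?thesis .
qed

lemma condK_eq:
  assumes ab: "a > 0" "b > 0" and a: "\<alpha> < 1" "\<theta> + \<alpha> > 0" and zv: "\<forall>A\<in>#z. A \<noteq> {} \<and> A \<subseteq> {1..n}"
  shows "cond_K a b \<alpha> \<theta> n m z j =
     (\<integral>\<gamma>. pois (\<gamma> * dl n m \<theta> \<alpha>) j * gamma_density (a + real (size z)) (b + g_fun n \<theta> \<alpha>) \<gamma> \<partial>lborel)"
  unfolding cond_K_def mix_single[OF ab a zv] mix_univ[OF ab a zv] using KK_pos[OF ab a, of n z] by simp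

lemma pois_Suc: "real (Suc i) * pois \<mu> (Suc i) = \<mu> * pois \<mu> i"
  by (simp add: pois_def fact_Suc field_simps del: of_nat_Suc)

lemma pois_s1: "(\<lambda>j. real j * pois \<mu> j) sums \<mu>"
proof -
  have "(\<lambda>i. real (Suc i) * pois \<mu> (Suc i)) sums (\<mu> * 1)"
    unfolding pois_Suc by (rule sums_mult[OF pois_sums])
  then show ?thesis by (subst (asm) sums_Suc_iff) simp
qed

lemma pois_s2: "(\<lambda>j. real j * (real j - 1) * pois \<mu> j) sums (\<mu> * \<mu>)"
proof -
  have "(\<lambda>i. real (Suc i) * (real (Suc i) - 1) * pois \<mu> (Suc i)) = (\<lambda>i. \<mu> * (real i * pois \<mu> i))"
  proof
    fix i
    have "real (Suc i) * (real (Suc i) - 1) * pois \<mu> (Suc i) = real i * (real (Suc i) * pois \<mu> (Suc i))"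
      by (simp add: algebra_simps)
    then show "real (Suc i) * (real (Suc i) - 1) * pois \<mu> (Suc i) = \<mu> * (real i * pois \<mu> i)"
      unfolding pois_Suc by simp
  qed
  moreover have "(\<lambda>i. \<mu> * (real i * pois \<mu> i)) sums (\<mu> * \<mu>)" by (rule sums_mult[OF pois_s1])
  ultimately have "(\<lambda>i. real (Suc i) * (real (Suc i) - 1) * pois \<mu> (Suc i)) sums (\<mu> * \<mu>)" by simp
  then have "(\<lambda>j. real j * (real j - 1) * pois \<mu> j) sums (\<mu> * \<mu> + real 0 * (real 0 - 1) * pois \<mu> 0)"
    by (rule sums_Suc_iff[THEN iffD1])
  then show ?thesis by simp
qed

lemma pois_var: "(\<lambda>j. pois \<mu> j * (real j - \<mu>)^2) sums \<mu>"
proof -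
  have e: "pois \<mu> j * (real j - \<mu>)^2 = real j * (real j - 1) * pois \<mu> j + (1 - 2 * \<mu>) * (real j * pois \<mu> j) + \<mu>^2 * pois \<mu> j" for j
    by (simp add: power2_eq_square algebra_simps)
  have "(\<lambda>j. real j * (real j - 1) * pois \<mu> j + (1 - 2 * \<mu>) * (real j * pois \<mu> j) + \<mu>^2 * pois \<mu> j)
        sums (\<mu> * \<mu> + (1 - 2 * \<mu>) * \<mu> + \<mu>^2 * 1)"
    by (intro sums_add sums_mult pois_s2 pois_s1 pois_sums)
  then show ?thesis unfolding e by (simp add: power2_eq_square algebra_simps)
qed

lemma cheb_gen:
  assumes mu: "\<mu> \<ge> 0" and d: "d > 0" and s: "(\<lambda>j. if Q j then pois \<mu> j else 0) sums s"
    and Q: "\<And>j. Q j \<Longrightarrow> d \<le> \<bar>real j - \<mu>\<bar>"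
  shows "s \<le> \<mu> / d^2"
proof -
  have g: "(\<lambda>j. pois \<mu> j * (real j - \<mu>)^2 / d^2) sums (\<mu> / d^2)"
    by (rule sums_divide[OF pois_var])
  show ?thesis
  proof (rule sums_le[OF _ s g])
    fix j
    show "(if Q j then pois \<mu> j else 0) \<le> pois \<mu> j * (real j - \<mu>)^2 / d^2"
    proof (cases "Q j")
      case True
      have "d^2 \<le> (real j - \<mu>)^2" using Q[OF True] d
        by (metis abs_le_square_iff abs_of_pos)
      then have "1 \<le> (real j - \<mu>)^2 / d^2" using d by simp
      then have "pois \<mu> j * 1 \<le> pois \<mu> j * ((real j - \<mu>)^2 / d^2)"
        using pois_nonneg[OF mu] by (intro mult_left_mono) auto
      then show ?thesis using True by simp
    next
      case False then show ?thesis using pois_nonneg[OF mu, of j] d by simp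
    qed
  qed
qed

lemma finite_le_real: "finite {j::nat. real j \<le> t}"
proof (rule finite_subset[of _ "{..nat \<lceil>t\<rceil>}"])
  show "{j::nat. real j \<le> t} \<subseteq> {..nat \<lceil>t\<rceil>}"
  proof
    fix j assume "j \<in> {j::nat. real j \<le> t}"
    then have "real j \<le> t" by simp
    then have "int j \<le> \<lceil>t\<rceil>" by linarith
    then show "j \<in> {..nat \<lceil>t\<rceil>}" by simp
  qed
qed simp

lemma pois_lim:
  assumes c: "filterlim c at_top sequentially" and mc: "(\<lambda>m. \<mu> m / c m) \<longlonglongrightarrow> l"
    and l: "l > 0" "l \<noteq> x" and mu: "\<And>m. \<mu> m \<ge> 0"
  shows "(\<lambda>m. sum (pois (\<mu> m)) {j. real j \<le> x * c m}) \<longlonglongrightarrow> (if l \<le> x then 1 else 0)"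
proof -
  define P where "P m = sum (pois (\<mu> m)) {j. real j \<le> x * c m}" for m
  have cpos: "eventually (\<lambda>m. c m > 0) sequentially" using c filterlim_at_top_dense by blast
  have ic: "(\<lambda>m. inverse (c m)) \<longlonglongrightarrow> 0" by (rule tendsto_inverse_0_at_top[OF c])
  have Pnn: "P m \<ge> 0" for m unfolding P_def by (intro sum_nonneg pois_nonneg mu)
  have Ple: "P m \<le> 1" for m unfolding P_def by (intro pois_sum_le1 mu finite_le_real)
  show ?thesis
  proof (cases "l \<le> x")
    case True
    then have lx: "l < x" using l by simp
    define \<kappa> where "\<kappa> = (x - l) / 2"
    have kp: "\<kappa> > 0" using lx by (simp add: \<kappa>_def)
    have ev1: "eventually (\<lambda>m. \<mu> m / c m < l + \<kappa>) sequentially"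
      using order_tendstoD(2)[OF mc, of "l + \<kappa>"] kp by simp
    define B where "B m = (\<mu> m / c m) * inverse (c m) / \<kappa>^2" for m
    have "(\<lambda>m. (\<mu> m / c m * inverse (c m)) / \<kappa>^2) \<longlonglongrightarrow> (l * 0) / \<kappa>^2"
      by (intro tendsto_divide tendsto_mult mc ic tendsto_const) (use kp in auto)
    then have Blim: "B \<longlonglongrightarrow> 0" unfolding B_def by simp
    have ev: "eventually (\<lambda>m. 1 - P m \<le> B m) sequentially"
      using ev1 cpos
    proof eventually_elim
      case (elim m)
      define A where "A = {j. real j \<le> x * c m}"
      have fA: "finite A" unfolding A_def by (rule finite_le_real)
      have s: "(\<lambda>j. if j \<notin> A then pois (\<mu> m) j else 0) sums (1 - P m)"
      proof -
        have "(\<lambda>j. pois (\<mu> m) j - (if j \<in> A then pois (\<mu> m) j else 0)) sums (1 - P m)"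
          unfolding P_def A_def[symmetric] by (intro sums_diff pois_sums sums_If_finite_set fA)
        moreover have "(\<lambda>j. pois (\<mu> m) j - (if j \<in> A then pois (\<mu> m) j else 0)) = (\<lambda>j. if j \<notin> A then pois (\<mu> m) j else 0)"
          by auto
        ultimately show ?thesis by simp
      qed
      have d: "\<kappa> * c m > 0" using kp elim by simp
      have Q: "\<kappa> * c m \<le> \<bar>real j - \<mu> m\<bar>" if "j \<notin> A" for j
      proof -
        have "real j > x * c m" using that by (simp add: A_def)
        moreover have "\<mu> m < (l + \<kappa>) * c m" using elim by (simp add: pos_divide_less_eq)
        moreover have "x * c m - (l + \<kappa>) * c m = \<kappa> * c m" by (simp add: \<kappa>_def field_simps)
        ultimately show ?thesis by linarith
      qed
      have "1 - P m \<le> \<mu> m / (\<kappa> * c m)^2" by (rule cheb_gen[OF mu d s Q])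
      also have "\<dots> = B m" using elim kp by (simp add: B_def power2_eq_square field_simps)
      finally show ?case .
    qed
    have "(\<lambda>m. 1 - P m) \<longlonglongrightarrow> 0"
      by (rule tendsto_sandwich[OF _ ev tendsto_const Blim]) (simp add: Ple)
    then have "(\<lambda>m. 1 - (1 - P m)) \<longlonglongrightarrow> 1 - 0" by (intro tendsto_diff tendsto_const)
    then show ?thesis using True unfolding P_def by simp
  next
    case False
    then have lx: "x < l" by simp
    define \<kappa> where "\<kappa> = (l - x) / 2"
    have kp: "\<kappa> > 0" using lx by (simp add: \<kappa>_def)
    have ev1: "eventually (\<lambda>m. \<mu> m / c m > l - \<kappa>) sequentially"
      using order_tendstoD(1)[OF mc, of "l - \<kappa>"] kp by simp
    define B where "B m = (\<mu> m / c m) * inverse (c m) / \<kappa>^2" for m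
    have "(\<lambda>m. (\<mu> m / c m * inverse (c m)) / \<kappa>^2) \<longlonglongrightarrow> (l * 0) / \<kappa>^2"
      by (intro tendsto_divide tendsto_mult mc ic tendsto_const) (use kp in auto)
    then have Blim: "B \<longlonglongrightarrow> 0" unfolding B_def by simp
    have ev: "eventually (\<lambda>m. P m \<le> B m) sequentially"
      using ev1 cpos
    proof eventually_elim
      case (elim m)
      define A where "A = {j. real j \<le> x * c m}"
      have fA: "finite A" unfolding A_def by (rule finite_le_real)
      have s: "(\<lambda>j. if j \<in> A then pois (\<mu> m) j else 0) sums P m"
        unfolding P_def A_def[symmetric] by (rule sums_If_finite_set[OF fA])
      have d: "\<kappa> * c m > 0" using kp elim by simp
      have Q: "\<kappa> * c m \<le> \<bar>real j - \<mu> m\<bar>" if "j \<in> A" for j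
      proof -
        have "real j \<le> x * c m" using that by (simp add: A_def)
        moreover have "\<mu> m > (l - \<kappa>) * c m" using elim by (simp add: pos_less_divide_eq)
        moreover have "(l - \<kappa>) * c m - x * c m = \<kappa> * c m" by (simp add: \<kappa>_def field_simps)
        ultimately show ?thesis by linarith
      qed
      have "P m \<le> \<mu> m / (\<kappa> * c m)^2" by (rule cheb_gen[OF mu d s Q])
      also have "\<dots> = B m" using elim kp by (simp add: B_def power2_eq_square field_simps)
      finally show ?case .
    qed
    have "P \<longlonglongrightarrow> 0"
      by (rule tendsto_sandwich[OF _ ev tendsto_const Blim]) (simp add: Pnn)
    then show ?thesis using False unfolding P_def by simp
  qed
qed

lemma measure_density_count_finite:
  assumes p: "\<And>j. p j \<ge> 0" and fA: "finite A"
  shows "measure (density (count_space UNIV) (\<lambda>j. ennreal (p j))) A = sum p A"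
proof -
  have "emeasure (density (count_space UNIV) (\<lambda>j. ennreal (p j))) A
      = (\<integral>\<^sup>+j. ennreal (p j) * indicator A j \<partial>count_space UNIV)"
    by (rule emeasure_density) auto
  also have "\<dots> = (\<integral>\<^sup>+j. ennreal (p j) \<partial>count_space A)"
    by (rule nn_integral_count_space_indicator[symmetric]) (use fA in \<open>auto simp: NO_MATCH_def\<close>)
  also have "\<dots> = (\<Sum>j\<in>A. ennreal (p j))" by (rule nn_integral_count_space_finite[OF fA])
  also have "\<dots> = ennreal (sum p A)" using p by simp
  finally show ?thesis unfolding measure_def using p by (simp add: sum_nonneg)
qed

lemma cdf_cls:
  assumes c: "c > 0" and p: "\<And>j. cond_K a b \<alpha> \<theta> n m z j \<ge> 0"
  shows "cdf (cond_law_scaled a b \<alpha> \<theta> n m z c) x = sum (cond_K a b \<alpha> \<theta> n m z) {j. real j \<le> x * c}"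
proof -
  define D where "D = density (count_space UNIV) (\<lambda>j. ennreal (cond_K a b \<alpha> \<theta> n m z j))"
  have meas: "(\<lambda>j. real j / c) \<in> measurable D borel" unfolding D_def by simp
  have pre: "(\<lambda>j. real j / c) -` {..x} \<inter> space D = {j. real j \<le> x * c}"
    using c by (auto simp: D_def pos_divide_le_eq)
  have "cdf (cond_law_scaled a b \<alpha> \<theta> n m z c) x = measure D ((\<lambda>j. real j / c) -` {..x} \<inter> space D)"
    unfolding cdf_def cond_law_scaled_def D_def[symmetric] by (rule measure_distr[OF meas]) simp
  also have "\<dots> = sum (cond_K a b \<alpha> \<theta> n m z) {j. real j \<le> x * c}"
    unfolding pre unfolding D_def by (rule measure_density_count_finite[OF p finite_le_real])
  finally show ?thesis .
qed

lemma cdf_gamma_integral: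
  assumes a: "a > 0" and b: "b > 0" and L: "L > 0"
  shows "cdf (gamma_measure a (b / L)) x = (\<integral>\<gamma>. indicator {\<gamma>. \<gamma> * L \<le> x} \<gamma> * gamma_density a b \<gamma> \<partial>lborel)"
proof -
  have setm: "{\<gamma>::real. \<gamma> * L \<le> x} \<in> sets borel" by measurable
  have "cdf (gamma_measure a (b / L)) x = measure (distr (gamma_measure a b) borel (\<lambda>\<gamma>. \<gamma> * L)) {..x}"
    unfolding cdf_def distr_gamma_scale[OF a b L] ..
  also have "\<dots> = measure (gamma_measure a b) ((\<lambda>\<gamma>. \<gamma> * L) -` {..x} \<inter> space (gamma_measure a b))"
    by (rule measure_distr) (auto simp: gamma_measure_def)
  also have "(\<lambda>\<gamma>. \<gamma> * L) -` {..x} \<inter> space (gamma_measure a b) = {\<gamma>. \<gamma> * L \<le> x}"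
    by (auto simp: gamma_measure_def)
  also have "measure (gamma_measure a b) {\<gamma>. \<gamma> * L \<le> x}
      = enn2real (\<integral>\<^sup>+\<gamma>. ennreal (gamma_density a b \<gamma>) * indicator {\<gamma>. \<gamma> * L \<le> x} \<gamma> \<partial>lborel)"
    unfolding measure_def gamma_measure_def using setm by (subst emeasure_density) auto
  also have "(\<integral>\<^sup>+\<gamma>. ennreal (gamma_density a b \<gamma>) * indicator {\<gamma>. \<gamma> * L \<le> x} \<gamma> \<partial>lborel)
      = (\<integral>\<^sup>+\<gamma>. ennreal (indicator {\<gamma>. \<gamma> * L \<le> x} \<gamma> * gamma_density a b \<gamma>) \<partial>lborel)"
    by (intro nn_integral_cong) (auto simp: indicator_def)
  also have "enn2real \<dots> = (\<integral>\<gamma>. indicator {\<gamma>. \<gamma> * L \<le> x} \<gamma> * gamma_density a b \<gamma> \<partial>lborel)"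
    using setm by (subst integral_eq_nn_integral) (auto simp: gd_nonneg[OF a])
  finally show ?thesis .
qed

lemma dct_cdf:
  assumes a: "a > 0" and b: "b > 0" and L: "L > 0" and D: "\<And>m. D m \<ge> 0"
    and DL: "(\<lambda>m. D m / c m) \<longlonglongrightarrow> L" and c: "filterlim c at_top sequentially"
  shows "(\<lambda>m. \<integral>\<gamma>. sum (pois (\<gamma> * D m)) {j. real j \<le> x * c m} * gamma_density a b \<gamma> \<partial>lborel)
      \<longlonglongrightarrow> (\<integral>\<gamma>. indicator {\<gamma>. \<gamma> * L \<le> x} \<gamma> * gamma_density a b \<gamma> \<partial>lborel)"
proof (rule integral_dominated_convergence[where w = "gamma_density a b"])
  have setm: "{\<gamma>::real. \<gamma> * L \<le> x} \<in> sets borel" by measurable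
  show "(\<lambda>\<gamma>. indicator {\<gamma>. \<gamma> * L \<le> x} \<gamma> * gamma_density a b \<gamma>) \<in> borel_measurable lborel"
    using setm by measurable
  show "(\<lambda>\<gamma>. sum (pois (\<gamma> * D m)) {j. real j \<le> x * c m} * gamma_density a b \<gamma>) \<in> borel_measurable lborel" for m
    by measurable
  show "integrable lborel (gamma_density a b)" by (rule gd_integrable[OF a b])
  show "AE \<gamma> in lborel. norm (sum (pois (\<gamma> * D m)) {j. real j \<le> x * c m} * gamma_density a b \<gamma>) \<le> gamma_density a b \<gamma>" for m
  proof (rule AE_I2)
    fix \<gamma> :: real
    show "norm (sum (pois (\<gamma> * D m)) {j. real j \<le> x * c m} * gamma_density a b \<gamma>) \<le> gamma_density a b \<gamma>"
    proof (cases "\<gamma> > 0")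
      case True
      have mu: "\<gamma> * D m \<ge> 0" using True D[of m] by simp
      have "0 \<le> sum (pois (\<gamma> * D m)) {j. real j \<le> x * c m}" by (intro sum_nonneg pois_nonneg mu)
      moreover have "sum (pois (\<gamma> * D m)) {j. real j \<le> x * c m} \<le> 1" by (intro pois_sum_le1 mu finite_le_real)
      ultimately show ?thesis using gd_nonneg[OF a, of b \<gamma>]
        by (auto simp: abs_mult intro!: mult_left_le_one_le)
    qed simp
  qed
  show "AE \<gamma> in lborel. (\<lambda>m. sum (pois (\<gamma> * D m)) {j. real j \<le> x * c m} * gamma_density a b \<gamma>)
      \<longlonglongrightarrow> indicator {\<gamma>. \<gamma> * L \<le> x} \<gamma> * gamma_density a b \<gamma>"
    using AE_lborel_singleton[of "x / L"]
  proof eventually_elim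
    case (elim \<gamma>)
    show ?case
    proof (cases "\<gamma> > 0")
      case True
      have lne: "\<gamma> * L \<noteq> x" using elim L by (auto simp: field_simps)
      have "(\<lambda>m. (\<gamma> * D m) / c m) \<longlonglongrightarrow> \<gamma> * L"
        using tendsto_mult[OF tendsto_const[of \<gamma>] DL] by (simp add: mult.assoc)
      then have "(\<lambda>m. sum (pois (\<gamma> * D m)) {j. real j \<le> x * c m}) \<longlonglongrightarrow> (if \<gamma> * L \<le> x then 1 else 0)"
        by (rule pois_lim[OF c]) (use True L lne D in \<open>auto\<close>)
      moreover have "indicator {\<gamma>. \<gamma> * L \<le> x} \<gamma> = (if \<gamma> * L \<le> x then 1 else (0::real))" by (simp add: indicator_def)
      ultimately show ?thesis by (simp only:) (rule tendsto_mult[OF _ tendsto_const])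
    qed simp
  qed
qed

lemma weak_conv_main:
  assumes ab: "a > 0" "b > 0" and a: "\<alpha> < 1" "\<theta> + \<alpha> > 0" and zv: "\<forall>A\<in>#z. A \<noteq> {} \<and> A \<subseteq> {1..n}"
    and L: "L > 0" and DL: "(\<lambda>m. dl n m \<theta> \<alpha> / c m) \<longlonglongrightarrow> L" and c: "filterlim c at_top sequentially"
  shows "weak_conv_m (\<lambda>m. cond_law_scaled a b \<alpha> \<theta> n m z (c m))
           (gamma_measure (a + real (size z)) ((b + g_fun n \<theta> \<alpha>) / L))"
  unfolding weak_conv_m_def weak_conv_def
proof (intro allI impI)
  fix x
  define a' where "a' = a + real (size z)"
  define b' where "b' = b + g_fun n \<theta> \<alpha>"
  have a': "a' > 0" using ab by (simp add: a'_def)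
  have b': "b' > 0" using g_nonneg[OF a, of n] ab by (simp add: b'_def)
  have ck: "cond_K a b \<alpha> \<theta> n m z j = (\<integral>\<gamma>. pois (\<gamma> * dl n m \<theta> \<alpha>) j * gamma_density a' b' \<gamma> \<partial>lborel)" for m j
    unfolding condK_eq[OF ab a zv] a'_def b'_def ..
  have int: "integrable lborel (\<lambda>\<gamma>. pois (\<gamma> * dl n m \<theta> \<alpha>) j * gamma_density a' b' \<gamma>)" for m j
  proof (rule gd_bounded_integrable'[OF a' b'])
    show "(\<lambda>\<gamma>. pois (\<gamma> * dl n m \<theta> \<alpha>) j) \<in> borel_measurable borel" by measurable
    fix \<gamma> :: real assume "\<gamma> > 0"
    then have mu: "\<gamma> * dl n m \<theta> \<alpha> \<ge> 0" using dl_nonneg[OF a, of n m] by simp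
    show "\<bar>pois (\<gamma> * dl n m \<theta> \<alpha>) j\<bar> \<le> 1" using pois_nonneg[OF mu] pois_le1[OF mu] by simp
  qed
  have pnn: "cond_K a b \<alpha> \<theta> n m z j \<ge> 0" for m j
    unfolding ck
  proof (rule integral_nonneg_AE, rule AE_I2)
    fix \<gamma> :: real show "0 \<le> pois (\<gamma> * dl n m \<theta> \<alpha>) j * gamma_density a' b' \<gamma>"
    proof (cases "\<gamma> > 0")
      case True
      then have mu: "\<gamma> * dl n m \<theta> \<alpha> \<ge> 0" using dl_nonneg[OF a, of n m] by simp
      show ?thesis using pois_nonneg[OF mu] gd_nonneg[OF a'] by simp
    qed simp
  qed
  have cpos: "eventually (\<lambda>m. c m > 0) sequentially" using c filterlim_at_top_dense by blast
  have ev: "eventually (\<lambda>m. (\<integral>\<gamma>. sum (pois (\<gamma> * dl n m \<theta> \<alpha>)) {j. real j \<le> x * c m} * gamma_density a' b' \<gamma> \<partial>lborel)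
       = cdf (cond_law_scaled a b \<alpha> \<theta> n m z (c m)) x) sequentially"
    using cpos
  proof eventually_elim
    case (elim m)
    have "cdf (cond_law_scaled a b \<alpha> \<theta> n m z (c m)) x = sum (cond_K a b \<alpha> \<theta> n m z) {j. real j \<le> x * c m}"
      by (rule cdf_cls[OF elim pnn])
    also have "\<dots> = (\<Sum>j\<in>{j. real j \<le> x * c m}. \<integral>\<gamma>. pois (\<gamma> * dl n m \<theta> \<alpha>) j * gamma_density a' b' \<gamma> \<partial>lborel)"
      by (simp add: ck)
    also have "\<dots> = (\<integral>\<gamma>. (\<Sum>j\<in>{j. real j \<le> x * c m}. pois (\<gamma> * dl n m \<theta> \<alpha>) j * gamma_density a' b' \<gamma>) \<partial>lborel)"
      by (subst Bochner_Integration.integral_sum) (auto intro: int)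
    also have "\<dots> = (\<integral>\<gamma>. sum (pois (\<gamma> * dl n m \<theta> \<alpha>)) {j. real j \<le> x * c m} * gamma_density a' b' \<gamma> \<partial>lborel)"
      by (simp add: sum_distrib_right)
    finally show ?case ..
  qed
  have lim: "(\<lambda>m. \<integral>\<gamma>. sum (pois (\<gamma> * dl n m \<theta> \<alpha>)) {j. real j \<le> x * c m} * gamma_density a' b' \<gamma> \<partial>lborel)
      \<longlonglongrightarrow> (\<integral>\<gamma>. indicator {\<gamma>. \<gamma> * L \<le> x} \<gamma> * gamma_density a' b' \<gamma> \<partial>lborel)"
    by (rule dct_cdf[OF a' b' L _ DL c]) (rule dl_nonneg[OF a])
  have "(\<lambda>m. cdf (cond_law_scaled a b \<alpha> \<theta> n m z (c m)) x) \<longlonglongrightarrow> (\<integral>\<gamma>. indicator {\<gamma>. \<gamma> * L \<le> x} \<gamma> * gamma_density a' b' \<gamma> \<partial>lborel)"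
    by (rule Lim_transform_eventually[OF lim ev])
  then show "(\<lambda>m. cdf (cond_law_scaled a b \<alpha> \<theta> n m z (c m)) x) \<longlonglongrightarrow> cdf (gamma_measure (a + real (size z)) ((b + g_fun n \<theta> \<alpha>) / L)) x"
    unfolding cdf_gamma_integral[OF a' b' L, of x, unfolded a'_def b'_def] a'_def b'_def .
qed

lemma stolz:
  fixes a b :: "nat \<Rightarrow> real"
  assumes inc: "\<And>m. m \<ge> Mz \<Longrightarrow> b m < b (Suc m)"
    and binf: "filterlim b at_top sequentially"
    and r: "(\<lambda>m. (a (Suc m) - a m) / (b (Suc m) - b m)) \<longlonglongrightarrow> L"
  shows "(\<lambda>m. a m / b m) \<longlonglongrightarrow> L"
proof (rule LIMSEQ_I)
  fix \<epsilon> :: real assume e: "\<epsilon> > 0"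
  have "\<exists>N1. \<forall>m\<ge>N1. norm ((a (Suc m) - a m) / (b (Suc m) - b m) - L) < \<epsilon> / 2"
    using LIMSEQ_D[OF r, of "\<epsilon> / 2"] e by simp
  then obtain N1 where N1: "\<And>m. m \<ge> N1 \<Longrightarrow> norm ((a (Suc m) - a m) / (b (Suc m) - b m) - L) < \<epsilon> / 2"
    by blast
  have evb: "eventually (\<lambda>m. Z < b m) sequentially" for Z
    using binf filterlim_at_top_dense[of b sequentially] by blast
  obtain N2 where N2: "\<And>m. m \<ge> N2 \<Longrightarrow> b m > 0"
    using evb[of 0] unfolding eventually_sequentially by blast
  define K where "K = max Mz (max N1 N2)"
  have stp: "\<bar>(a (Suc m) - a m) - L * (b (Suc m) - b m)\<bar> \<le> \<epsilon> / 2 * (b (Suc m) - b m)" if "m \<ge> K" for m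
  proof -
    define D where "D = b (Suc m) - b m"
    define Y where "Y = (a (Suc m) - a m) - L * D"
    have mK: "m \<ge> Mz" "m \<ge> N1" using that unfolding K_def by auto
    have pos: "D > 0" using inc[OF mK(1)] by (simp add: D_def)
    have h: "\<bar>(a (Suc m) - a m) / D - L\<bar> < \<epsilon> / 2" using N1[OF mK(2)] by (simp add: D_def)
    have "(a (Suc m) - a m) / D - L = Y / D" using pos by (simp add: Y_def field_simps)
    then have "\<bar>Y / D\<bar> < \<epsilon> / 2" using h by simp
    then have "\<bar>Y\<bar> / D < \<epsilon> / 2" using pos by (simp add: abs_divide)
    then have "\<bar>Y\<bar> < \<epsilon> / 2 * D" using pos by (simp add: pos_divide_less_eq)
    then show ?thesis by (simp add: Y_def D_def)
  qed
  have tele: "\<bar>(a m - a K) - L * (b m - b K)\<bar> \<le> \<epsilon> / 2 * (b m - b K)" if "m \<ge> K" for m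
    using that
  proof (induction m rule: dec_induct)
    case base then show ?case by simp
  next
    case (step m)
    have "\<bar>(a (Suc m) - a K) - L * (b (Suc m) - b K)\<bar>
        \<le> \<bar>(a m - a K) - L * (b m - b K)\<bar> + \<bar>(a (Suc m) - a m) - L * (b (Suc m) - b m)\<bar>"
      by (rule order_trans[OF _ abs_triangle_ineq]) (simp add: algebra_simps)
    also have "\<dots> \<le> \<epsilon> / 2 * (b m - b K) + \<epsilon> / 2 * (b (Suc m) - b m)"
      using step.IH stp[OF step.hyps(1)] by (intro add_mono) auto
    also have "\<dots> = \<epsilon> / 2 * (b (Suc m) - b K)"
    proof -
      define h where "h = \<epsilon> / 2"
      have "h * (b m - b K) + h * (b (Suc m) - b m) = h * (b (Suc m) - b K)" by (simp add: algebra_simps)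
      then show ?thesis by (simp only: h_def)
    qed
    finally show ?case .
  qed
  have bmono: "b m \<ge> b K" if "m \<ge> K" for m
    using that
  proof (induction m rule: dec_induct)
    case (step m) then show ?case using inc[of m] by (simp add: K_def)
  qed simp
  have bK: "b K > 0" using N2[of K] by (simp add: K_def)
  define C where "C = \<bar>a K - L * b K\<bar>"
  obtain N3 where N3: "\<And>m. m \<ge> N3 \<Longrightarrow> b m > 2 * C / \<epsilon>"
    using evb[of "2 * C / \<epsilon>"] unfolding eventually_sequentially by blast
  show "\<exists>no. \<forall>m\<ge>no. norm (a m / b m - L) < \<epsilon>"
  proof (intro exI allI impI)
    fix m assume m: "m \<ge> max K N3"
    have bm: "b m > 0" using bmono[of m] bK m by simp
    have mK: "m \<ge> K" "m \<ge> N3" using m by auto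
    have eq: "a m - L * b m = (a K - L * b K) + ((a m - a K) - L * (b m - b K))" by (simp add: algebra_simps)
    have "\<bar>a m - L * b m\<bar> = \<bar>(a K - L * b K) + ((a m - a K) - L * (b m - b K))\<bar>" by (subst eq) (rule refl)
    also have "\<dots> \<le> C + \<bar>(a m - a K) - L * (b m - b K)\<bar>" unfolding C_def by (rule abs_triangle_ineq)
    also have "\<dots> \<le> C + \<epsilon> / 2 * (b m - b K)" using tele[OF mK(1)] by (rule add_left_mono)
    also have "\<dots> < \<epsilon> / 2 * b m + \<epsilon> / 2 * b m"
    proof -
      have "C < \<epsilon> / 2 * b m" using N3[OF mK(2)] e by (simp add: field_simps)
      moreover have "\<epsilon> / 2 * (b m - b K) \<le> \<epsilon> / 2 * b m" using bK e by simp
      ultimately show ?thesis by (rule add_less_le_mono)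
    qed
    also have "\<dots> = \<epsilon> * b m" by simp
    finally have X: "\<bar>a m - L * b m\<bar> < \<epsilon> * b m" .
    have "\<bar>a m - L * b m\<bar> / b m < \<epsilon>" using X bm by (simp add: pos_divide_less_eq)
    moreover have "\<bar>a m - L * b m\<bar> / b m = \<bar>a m / b m - L\<bar>"
    proof -
      have "a m / b m - L = (a m - L * b m) / b m" using bm by (simp add: field_simps)
      then show ?thesis using bm by (simp add: abs_divide)
    qed
    ultimately show "norm (a m / b m - L) < \<epsilon>" by simp
  qed
qed

lemma dl_Suc: "dl n (Suc m) \<theta> \<alpha> - dl n m \<theta> \<alpha> = pochhammer (\<theta> + \<alpha>) (n + m) / pochhammer (\<theta> + 1) (n + m)"
  unfolding dl_def by (simp add: g_fun_Suc)

lemma poch_ratio0: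
  assumes "\<theta> > 0"
  shows "pochhammer \<theta> N / pochhammer (\<theta> + 1) N = \<theta> / (\<theta> + real N)"
proof -
  have "pochhammer \<theta> (Suc N) = \<theta> * pochhammer (\<theta> + 1) N" by (rule pochhammer_rec)
  moreover have "pochhammer \<theta> (Suc N) = pochhammer \<theta> N * (\<theta> + real N)" by (rule pochhammer_Suc)
  moreover have "pochhammer (\<theta> + 1) N > 0" "\<theta> + real N > 0" using assms by (auto intro: pochhammer_pos)
  ultimately show ?thesis by (simp add: field_simps)
qed

lemma asymp0:
  assumes th: "\<theta> > 0"
  shows "(\<lambda>m. dl n m \<theta> 0 / ln (real m)) \<longlonglongrightarrow> \<theta>"
proof (rule stolz[where Mz = 1])
  show "ln (real m) < ln (real (Suc m))" if "m \<ge> 1" for m using that by simp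
  show "filterlim (\<lambda>m. ln (real m)) at_top sequentially" by real_asymp
  have "(\<lambda>m::nat. (\<theta> / (\<theta> + real n + real m)) / (ln (real (Suc m)) - ln (real m))) \<longlonglongrightarrow> \<theta>"
    using th by real_asymp
  moreover have "(dl n (Suc m) \<theta> 0 - dl n m \<theta> 0) = \<theta> / (\<theta> + real n + real m)" for m
    unfolding dl_Suc using poch_ratio0[OF th, of "n + m"] by (simp add: add.assoc)
  ultimately show "(\<lambda>m. (dl n (Suc m) \<theta> 0 - dl n m \<theta> 0) / (ln (real (Suc m)) - ln (real m))) \<longlonglongrightarrow> \<theta>"
    by simp
qed

lemma GS_real: "N > 0 \<Longrightarrow> Gamma_series (z::real) N = fact N * real N powr z / (pochhammer z N * (z + real N))"
  by (simp add: Gamma_series_def powr_def pochhammer_Suc mult.commute)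

lemma poch_ratio_GS:
  assumes a1: "\<alpha> < 1" and a2: "\<theta> + \<alpha> > 0" and N: "N > 0"
  shows "pochhammer (\<theta> + \<alpha>) N / pochhammer (\<theta> + 1) N * real N powr (1 - \<alpha>)
       = Gamma_series (\<theta> + 1) N / Gamma_series (\<theta> + \<alpha>) N * ((\<theta> + 1 + real N) / (\<theta> + \<alpha> + real N))"
proof -
  define Pa where "Pa = pochhammer (\<theta> + \<alpha>) N"
  define P1 where "P1 = pochhammer (\<theta> + 1) N"
  define x where "x = real N"
  have x: "x > 0" using N by (simp add: x_def)
  have pos: "Pa > 0" "P1 > 0" "\<theta> + 1 + x > 0" "\<theta> + \<alpha> + x > 0"
    using a1 a2 x by (auto simp: Pa_def P1_def intro!: pochhammer_pos)
  have pw: "x powr (1 - \<alpha>) = x powr (\<theta> + 1) / x powr (\<theta> + \<alpha>)"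
    using x by (simp add: powr_diff[symmetric])
  have fp: "fact N > (0::real)" by simp
  have gen: "Pa / P1 * (U / V) = (F * U / (P1 * C)) / (F * V / (Pa * D)) * (C / D)"
    if "Pa > 0" "P1 > 0" "C > 0" "D > 0" "F > 0" "U > 0" "V > 0" for Pa P1 C D F U V :: real
    using that by (simp add: field_simps)
  have "real N powr (\<theta> + 1) > 0" "real N powr (\<theta> + \<alpha>) > 0" using x by (auto simp: x_def)
  from gen[OF pos(1,2) _ _ fp this] pos(3,4)
  show ?thesis
    unfolding GS_real[OF N] Pa_def[symmetric] P1_def[symmetric] x_def[symmetric] pw
    by (simp add: add_ac)
qed

lemma asympA:
  assumes a0: "\<alpha> > 0" and a1: "\<alpha> < 1" and a2: "\<theta> + \<alpha> > 0"
  shows "(\<lambda>m. dl n m \<theta> \<alpha> / real m powr \<alpha>) \<longlonglongrightarrow> Gamma (\<theta> + 1) / (\<alpha> * Gamma (\<theta> + \<alpha>))"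
proof (rule stolz[where Mz = 0])
  show "real m powr \<alpha> < real (Suc m) powr \<alpha>" for m
    using a0 by (cases "m = 0") (auto intro!: powr_less_mono2)
  show "filterlim (\<lambda>m. real m powr \<alpha>) at_top sequentially" using a0 by real_asymp
  define t where "t N = pochhammer (\<theta> + \<alpha>) N / pochhammer (\<theta> + 1) N" for N
  have G1: "Gamma (\<theta> + 1) > 0" "Gamma (\<theta> + \<alpha>) > 0" using a1 a2 by (auto intro!: Gamma_real_pos)
  have R1: "(\<lambda>m. t (m + n) * real (m + n) powr (1 - \<alpha>)) \<longlonglongrightarrow> Gamma (\<theta> + 1) / Gamma (\<theta> + \<alpha>)"
  proof -
    have l1: "(\<lambda>N. Gamma_series (\<theta> + 1) N / Gamma_series (\<theta> + \<alpha>) N * ((\<theta> + 1 + real N) / (\<theta> + \<alpha> + real N)))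
        \<longlonglongrightarrow> Gamma (\<theta> + 1) / Gamma (\<theta> + \<alpha>) * 1"
    proof (intro tendsto_mult tendsto_divide Gamma_series_LIMSEQ)
      show "Gamma (\<theta> + \<alpha>) \<noteq> 0" using G1 by simp
      show "(\<lambda>N. (\<theta> + 1 + real N) / (\<theta> + \<alpha> + real N)) \<longlonglongrightarrow> 1" by real_asymp
    qed
    have ev: "eventually (\<lambda>N. Gamma_series (\<theta> + 1) N / Gamma_series (\<theta> + \<alpha>) N * ((\<theta> + 1 + real N) / (\<theta> + \<alpha> + real N))
        = t N * real N powr (1 - \<alpha>)) sequentially"
      using eventually_gt_at_top[of 0]
    proof eventually_elim
      case (elim N)
      show ?case using poch_ratio_GS[OF a1 a2 elim] by (simp add: t_def)
    qed
    have "t \<longlonglongrightarrow> 0 \<or> True" by simp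
    have "(\<lambda>N. t N * real N powr (1 - \<alpha>)) \<longlonglongrightarrow> Gamma (\<theta> + 1) / Gamma (\<theta> + \<alpha>)"
      using Lim_transform_eventually[OF l1 ev] by simp
    then show ?thesis by (rule LIMSEQ_ignore_initial_segment)
  qed
  have R2: "(\<lambda>m::nat. (real n + real m) powr (\<alpha> - 1) / (real (Suc m) powr \<alpha> - real m powr \<alpha>)) \<longlonglongrightarrow> inverse \<alpha>"
    using a0 a1 by real_asymp
  have prod: "(\<lambda>m. t (m + n) * real (m + n) powr (1 - \<alpha>) * ((real n + real m) powr (\<alpha> - 1) / (real (Suc m) powr \<alpha> - real m powr \<alpha>)))
      \<longlonglongrightarrow> Gamma (\<theta> + 1) / Gamma (\<theta> + \<alpha>) * inverse \<alpha>"
    by (rule tendsto_mult[OF R1 R2])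
  have ev2: "eventually (\<lambda>m. t (m + n) * real (m + n) powr (1 - \<alpha>) * ((real n + real m) powr (\<alpha> - 1) / (real (Suc m) powr \<alpha> - real m powr \<alpha>))
      = (dl n (Suc m) \<theta> \<alpha> - dl n m \<theta> \<alpha>) / (real (Suc m) powr \<alpha> - real m powr \<alpha>)) sequentially"
    using eventually_gt_at_top[of 0]
  proof eventually_elim
    case (elim m)
    have x: "real n + real m > 0" using elim by simp
    have "real (m + n) powr (1 - \<alpha>) * (real n + real m) powr (\<alpha> - 1) = 1"
      using x by (simp add: powr_add[symmetric] add.commute)
    then show ?case unfolding dl_Suc t_def by (simp add: add.commute mult.assoc)
  qed
  show "(\<lambda>m. (dl n (Suc m) \<theta> \<alpha> - dl n m \<theta> \<alpha>) / (real (Suc m) powr \<alpha> - real m powr \<alpha>))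
      \<longlonglongrightarrow> Gamma (\<theta> + 1) / (\<alpha> * Gamma (\<theta> + \<alpha>))"
    using Lim_transform_eventually[OF prod ev2] by (simp add: field_simps)
qed

theorem proposition5:
  fixes a b \<alpha> \<theta> :: real and n :: nat and z :: "nat set multiset"
  assumes "a > 0" and "b > 0" and "0 \<le> \<alpha>" and "\<alpha> < 1" and "\<theta> > - \<alpha>"
    and "\<forall>B\<in>#z. B \<noteq> {} \<and> B \<subseteq> {1..n}"
  shows "posterior a b \<alpha> \<theta> n z = gamma_measure (a + real (size z)) (b + g_fun n \<theta> \<alpha>)
    \<and> (\<alpha> = 0 \<longrightarrow>
           weak_conv_m (\<lambda>m. cond_law_scaled a b \<alpha> \<theta> n m z (ln (real m)))
             (gamma_measure (a + real (size z)) ((b + g_fun n \<theta> 0) / \<theta>))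
         \<and> distr (posterior a b \<alpha> \<theta> n z) borel (\<lambda>\<gamma>. \<gamma> * \<theta>)
             = gamma_measure (a + real (size z)) ((b + g_fun n \<theta> 0) / \<theta>))
    \<and> (0 < \<alpha> \<longrightarrow>
           weak_conv_m (\<lambda>m. cond_law_scaled a b \<alpha> \<theta> n m z (real m powr \<alpha>))
             (gamma_measure (a + real (size z))
                ((b + g_fun n \<theta> \<alpha>) * (\<alpha> * Gamma (\<theta> + \<alpha>) / Gamma (\<theta> + 1))))
         \<and> distr (posterior a b \<alpha> \<theta> n z) borel (\<lambda>\<gamma>. \<gamma> * Gamma (\<theta> + 1) / (\<alpha> * Gamma (\<theta> + \<alpha>)))
             = gamma_measure (a + real (size z))
                ((b + g_fun n \<theta> \<alpha>) * (\<alpha> * Gamma (\<theta> + \<alpha>) / Gamma (\<theta> + 1))))"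
proof -
  have a1: "\<alpha> < 1" and a2: "\<theta> + \<alpha> > 0" using assms by auto
  have ab: "a > 0" "b > 0" using assms by auto
  have zv: "\<forall>A\<in>#z. A \<noteq> {} \<and> A \<subseteq> {1..n}" using assms by auto
  have bG: "b + g_fun n \<theta> \<alpha> > 0" using g_nonneg[OF a1 a2, of n] ab by simp
  have a': "a + real (size z) > 0" using ab by simp
  have P: "posterior a b \<alpha> \<theta> n z = gamma_measure (a + real (size z)) (b + g_fun n \<theta> \<alpha>)"
    by (rule posterior_eq[OF ab a1 a2])
  have Z: "\<alpha> = 0 \<longrightarrow>
           weak_conv_m (\<lambda>m. cond_law_scaled a b \<alpha> \<theta> n m z (ln (real m)))
             (gamma_measure (a + real (size z)) ((b + g_fun n \<theta> 0) / \<theta>))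
         \<and> distr (posterior a b \<alpha> \<theta> n z) borel (\<lambda>\<gamma>. \<gamma> * \<theta>)
             = gamma_measure (a + real (size z)) ((b + g_fun n \<theta> 0) / \<theta>)"
  proof
    assume a0: "\<alpha> = 0"
    have th: "\<theta> > 0" using a2 a0 by simp
    have "weak_conv_m (\<lambda>m. cond_law_scaled a b \<alpha> \<theta> n m z (ln (real m)))
             (gamma_measure (a + real (size z)) ((b + g_fun n \<theta> \<alpha>) / \<theta>))"
    proof (rule weak_conv_main[OF ab a1 a2 zv th])
      show "(\<lambda>m. dl n m \<theta> \<alpha> / ln (real m)) \<longlonglongrightarrow> \<theta>" using asymp0[OF th, of n] a0 by simp
      show "filterlim (\<lambda>m. ln (real m)) at_top sequentially" by real_asymp
    qed
    moreover have "distr (posterior a b \<alpha> \<theta> n z) borel (\<lambda>\<gamma>. \<gamma> * \<theta>)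
             = gamma_measure (a + real (size z)) ((b + g_fun n \<theta> \<alpha>) / \<theta>)"
      unfolding P by (rule distr_gamma_scale[OF a' bG th])
    ultimately show "weak_conv_m (\<lambda>m. cond_law_scaled a b \<alpha> \<theta> n m z (ln (real m)))
             (gamma_measure (a + real (size z)) ((b + g_fun n \<theta> 0) / \<theta>))
         \<and> distr (posterior a b \<alpha> \<theta> n z) borel (\<lambda>\<gamma>. \<gamma> * \<theta>)
             = gamma_measure (a + real (size z)) ((b + g_fun n \<theta> 0) / \<theta>)" using a0 by simp
  qed
  have Pp: "0 < \<alpha> \<longrightarrow>
           weak_conv_m (\<lambda>m. cond_law_scaled a b \<alpha> \<theta> n m z (real m powr \<alpha>))
             (gamma_measure (a + real (size z))
                ((b + g_fun n \<theta> \<alpha>) * (\<alpha> * Gamma (\<theta> + \<alpha>) / Gamma (\<theta> + 1))))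
         \<and> distr (posterior a b \<alpha> \<theta> n z) borel (\<lambda>\<gamma>. \<gamma> * Gamma (\<theta> + 1) / (\<alpha> * Gamma (\<theta> + \<alpha>)))
             = gamma_measure (a + real (size z))
                ((b + g_fun n \<theta> \<alpha>) * (\<alpha> * Gamma (\<theta> + \<alpha>) / Gamma (\<theta> + 1)))"
  proof
    assume a0: "0 < \<alpha>"
    define L where "L = Gamma (\<theta> + 1) / (\<alpha> * Gamma (\<theta> + \<alpha>))"
    have G1: "Gamma (\<theta> + 1) > 0" "Gamma (\<theta> + \<alpha>) > 0" using a1 a2 by (auto intro!: Gamma_real_pos)
    have L: "L > 0" unfolding L_def using G1 a0 by simp
    have rate: "(b + g_fun n \<theta> \<alpha>) / L = (b + g_fun n \<theta> \<alpha>) * (\<alpha> * Gamma (\<theta> + \<alpha>) / Gamma (\<theta> + 1))"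
      unfolding L_def by simp
    have fn: "(\<lambda>\<gamma>. \<gamma> * Gamma (\<theta> + 1) / (\<alpha> * Gamma (\<theta> + \<alpha>))) = (\<lambda>\<gamma>. \<gamma> * L)"
      unfolding L_def by (simp add: fun_eq_iff)
    have "weak_conv_m (\<lambda>m. cond_law_scaled a b \<alpha> \<theta> n m z (real m powr \<alpha>))
             (gamma_measure (a + real (size z)) ((b + g_fun n \<theta> \<alpha>) / L))"
    proof (rule weak_conv_main[OF ab a1 a2 zv L])
      show "(\<lambda>m. dl n m \<theta> \<alpha> / real m powr \<alpha>) \<longlonglongrightarrow> L" unfolding L_def by (rule asympA[OF a0 a1 a2])
      show "filterlim (\<lambda>m. real m powr \<alpha>) at_top sequentially" using a0 by real_asymp
    qed
    moreover have "distr (posterior a b \<alpha> \<theta> n z) borel (\<lambda>\<gamma>. \<gamma> * L)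
             = gamma_measure (a + real (size z)) ((b + g_fun n \<theta> \<alpha>) / L)"
      unfolding P by (rule distr_gamma_scale[OF a' bG L])
    ultimately show "weak_conv_m (\<lambda>m. cond_law_scaled a b \<alpha> \<theta> n m z (real m powr \<alpha>))
             (gamma_measure (a + real (size z))
                ((b + g_fun n \<theta> \<alpha>) * (\<alpha> * Gamma (\<theta> + \<alpha>) / Gamma (\<theta> + 1))))
         \<and> distr (posterior a b \<alpha> \<theta> n z) borel (\<lambda>\<gamma>. \<gamma> * Gamma (\<theta> + 1) / (\<alpha> * Gamma (\<theta> + \<alpha>)))
             = gamma_measure (a + real (size z))
                ((b + g_fun n \<theta> \<alpha>) * (\<alpha> * Gamma (\<theta> + \<alpha>) / Gamma (\<theta> + 1)))"
      unfolding fn rate[symmetric] by simp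
  qed
  show ?thesis using P Z Pp by blast
qed

end
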